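(* Let $\mathcal X$ be a finite multi-set of real symmetric $2\times2$ matrices satisfying the hypotheses of Lemma 7 (unique largest eigenvalue $\lambda_1$; unique second largest eigenvalue $\lambda_2$ whose eigenvector is not perpendicular to that of $\lambda_1$), and let $S=\mathrm{Sup}_{\mathrm{LE}}(\mathcal X)$. Define $\boldsymbol\varphi:\mathcal U(\mathcal X)\to\mathbb R^2$ by $\boldsymbol\varphi(Y)=(\lambda,\mu)$, where $\lambda\ge\mu$ are the eigenvalues of $Y$, and equip $\mathbb R^2$ with the lexicographic order $(a,b)\preccurlyeq(a',b')\iff a<a'\ \text{or}\ (a=a'\ \text{and}\ b\le b')$. Then: (i) $\boldsymbol\varphi$ is Loewner-monotone: $B\le_{\mathrm L}A$ implies $\boldsymbol\varphi(B)\preccurlyeq\boldsymbol\varphi(A)$ for $A,B\in\mathcal U(\mathcal X)$; (ii) $\boldsymbol\varphi$ is convex on $\mathcal U(\mathcal X)$ with respect to the order cone $K=\{x\in\mathbb R^2:x\succcurlyeq0\}$, i.e. $\alpha\boldsymbol\varphi(Y_1)+(1-\alpha)\boldsymbol\varphi(Y_2)-\boldsymbol\varphi(\alpha Y_1+(1-\alpha)Y_2)\in K$ for all $Y_1,Y_2\in\mathcal U(\mathcal X)$, $\alpha\in[0,1]$; (iii) $S$ is the unique minimiser of $\boldsymbol\varphi$ (with respect to $\preccurlyeq$) on the super-upper bound cone $\mathcal U_*(\mathcal X)$.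
   Context: $\mathrm{Sym}(2)$: real symmetric $2\times2$ matrices; $A\le_{\mathrm L}B$ means $B-A$ positive semidefinite; $\mathcal U(\mathcal X):=\{Y\in\mathrm{Sym}(2):X\le_{\mathrm L}Y\ \forall X\in\mathcal X\}$ (a convex set). $\mathrm{Sup}_{\mathrm{LE}}(\mathcal X):=\lim_{m\to\infty}\frac1m\log\sum_{X\in\mathcal X}\exp(mX)$. For positive semidefinite $Y=\lambda uu^{\mathsf T}+\mu vv^{\mathsf T}$, $Y^p:=\lambda^puu^{\mathsf T}+\mu^pvv^{\mathsf T}$. If all eigenvalues of matrices in $\mathcal X$ are nonnegative: $\mathcal X^p:=\{X^p:X\in\mathcal X\}$, $\mathcal U_p(\mathcal X):=\{Y\in\mathrm{Sym}(2)\text{ positive semidefinite}:Y^p\in\mathcal U(\mathcal X^p)\}$, and $\mathcal U_*(\mathcal X):=\bigcap_{p>0}\mathcal U_p(\mathcal X)$. If the smallest eigenvalue among the matrices of $\mathcal X$ is $-c<0$: $\mathcal U_*(\mathcal X):=\mathcal U_*(\mathcal X+c)-c$, where $\mathcal X+c:=\{X+cI:X\in\mathcal X\}$ and $\mathcal V-c:=\{Y-cI:Y\in\mathcal V\}$. Eigenvalue conventions: the eigenvalues of $\mathcal X$ form the multi-set of both eigenvalues of every matrix; unique means occurring exactly once. *)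

theory Defs
  imports "HOL-Analysis.Analysis" "HOL-Library.Multiset"
begin

type_synonym mat2 = "real^2^2"

definition sym2 :: "mat2 \<Rightarrow> bool" where
  "sym2 A \<longleftrightarrow> transpose A = A"

definition psd2 :: "mat2 \<Rightarrow> bool" where
  "psd2 A \<longleftrightarrow> sym2 A \<and> (\<forall>v. v \<bullet> (A *v v) \<ge> 0)"

definition loewner_le :: "mat2 \<Rightarrow> mat2 \<Rightarrow> bool" where
  "loewner_le A B \<longleftrightarrow> psd2 (B - A)"

definition eigenvalues2 :: "mat2 \<Rightarrow> real set" where
  "eigenvalues2 A = {l. \<exists>v. v \<noteq> 0 \<and> A *v v = l *\<^sub>R v}"

definition lmax :: "mat2 \<Rightarrow> real" where
  "lmax A = Max (eigenvalues2 A)"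

definition lmin :: "mat2 \<Rightarrow> real" where
  "lmin A = Min (eigenvalues2 A)"

definition eigs :: "mat2 multiset \<Rightarrow> real multiset" where
  "eigs XX = (\<Sum>A\<in>#XX. {#lmax A, lmin A#})"

text \<open>Spectral functional calculus for symmetric matrices:
  f(lambda u u^T + mu v v^T) = f(lambda) u u^T + f(mu) v v^T.\<close>
definition matfun :: "(real \<Rightarrow> real) \<Rightarrow> mat2 \<Rightarrow> mat2" where
  "matfun f A = (THE B. \<forall>v l. A *v v = l *\<^sub>R v \<longrightarrow> B *v v = f l *\<^sub>R v)"

definition Sup_LE :: "mat2 multiset \<Rightarrow> mat2" where
  "Sup_LE XX = lim (\<lambda>m::nat. (1 / real m) *\<^sub>R
      matfun ln (\<Sum>A\<in>#XX. matfun exp (real m *\<^sub>R A)))"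

definition UB :: "mat2 multiset \<Rightarrow> mat2 set" where
  "UB XX = {Y. sym2 Y \<and> (\<forall>A\<in>#XX. loewner_le A Y)}"

definition mpow :: "real \<Rightarrow> mat2 \<Rightarrow> mat2" where
  "mpow p Y = matfun (\<lambda>x. x powr p) Y"

definition UB_p :: "real \<Rightarrow> mat2 multiset \<Rightarrow> mat2 set" where
  "UB_p p XX = {Y. psd2 Y \<and> mpow p Y \<in> UB (image_mset (mpow p) XX)}"

definition UB_star0 :: "mat2 multiset \<Rightarrow> mat2 set" where
  "UB_star0 XX = (\<Inter>p\<in>{p. p > 0}. UB_p p XX)"

definition UB_star :: "mat2 multiset \<Rightarrow> mat2 set" where
  "UB_star XX =
     (if \<forall>l\<in>#eigs XX. l \<ge> 0 then UB_star0 XX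
      else (let c = - Min (set_mset (eigs XX)) in
            (\<lambda>Y. Y - c *\<^sub>R mat 1) ` UB_star0 (image_mset (\<lambda>A. A + c *\<^sub>R mat 1) XX)))"

definition phi :: "mat2 \<Rightarrow> real \<times> real" where
  "phi Y = (lmax Y, lmin Y)"

definition lexle :: "real \<times> real \<Rightarrow> real \<times> real \<Rightarrow> bool" where
  "lexle x y \<longleftrightarrow> fst x < fst y \<or> (fst x = fst y \<and> snd x \<le> snd y)"

definition lemma7_hyp :: "mat2 multiset \<Rightarrow> bool" where
  "lemma7_hyp XX \<longleftrightarrow>
     (\<exists>l1 l2. count (eigs XX) l1 = 1 \<and> (\<forall>l\<in>#eigs XX. l \<le> l1) \<and>
        count (eigs XX) l2 = 1 \<and> l2 < l1 \<and> (\<forall>l\<in>#eigs XX. l \<noteq> l1 \<longrightarrow> l \<le> l2) \<and>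
        (\<forall>A1\<in>#XX. \<forall>A2\<in>#XX. \<forall>u1 u2.
            u1 \<noteq> 0 \<and> A1 *v u1 = l1 *\<^sub>R u1 \<and> u2 \<noteq> 0 \<and> A2 *v u2 = l2 *\<^sub>R u2
            \<longrightarrow> u1 \<bullet> u2 \<noteq> 0))"

end

theory Submission
  imports Defs
begin


definition perp :: "real^2 \<Rightarrow> real^2" where "perp u = vector [-(u$2), u$1]"
definition mk :: "real^2 \<Rightarrow> real \<Rightarrow> real \<Rightarrow> mat2" where
  "mk u a b = (\<chi> i j. a*u$i*u$j + b*perp u$i*perp u$j)"
definition unit2 :: "real^2 \<Rightarrow> bool" where "unit2 u \<longleftrightarrow> u$1^2 + u$2^2 = 1"

lemma perp_c[simp]: "perp u $1 = -(u$2)" "perp u $2 = u$1" by (simp_all add: perp_def)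
lemma inner_2: "(x::real^2) \<bullet> y = x$1*y$1 + x$2*y$2"
  by (simp add: inner_vec_def sum_2)
lemma mv_c[simp]: "((M::mat2) *v x)$1 = M$1$1*x$1 + M$1$2*x$2" "(M *v x)$2 = M$2$1*x$1 + M$2$2*x$2"
  by (simp_all add: matrix_vector_mult_def sum_2)
lemma mk_c[simp]: "mk u a b $1$1 = a*u$1*u$1 + b*u$2*u$2" "mk u a b $1$2 = a*u$1*u$2 - b*u$2*u$1"
  "mk u a b $2$1 = a*u$2*u$1 - b*u$1*u$2" "mk u a b $2$2 = a*u$2*u$2 + b*u$1*u$1"
  by (simp_all add: mk_def)
lemma vec2_eq: "(x::'a^2) = y \<longleftrightarrow> x$1 = y$1 \<and> x$2 = y$2"
  by (simp add: vec_eq_iff forall_2)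
lemma mat2_eq: "(A::'a^2^2) = B \<longleftrightarrow> A$1$1 = B$1$1 \<and> A$1$2 = B$1$2 \<and> A$2$1 = B$2$1 \<and> A$2$2 = B$2$2"
  by (simp add: vec_eq_iff forall_2)
lemma sym2_c: "sym2 A \<longleftrightarrow> A$1$2 = A$2$1"
  by (auto simp: sym2_def mat2_eq transpose_def)
lemma mat1_c[simp]: "(mat 1::mat2)$1$1 = 1" "(mat 1::mat2)$1$2 = 0" "(mat 1::mat2)$2$1 = 0" "(mat 1::mat2)$2$2 = 1"
  by (simp_all add: mat_def)

lemma mk_sym: "sym2 (mk u a b)" by (simp add: sym2_c)
lemma mk_u: "unit2 u \<Longrightarrow> mk u a b *v u = a *\<^sub>R u"
  unfolding unit2_def by (simp add: vec2_eq power2_eq_square) algebra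
lemma mk_pu: "unit2 u \<Longrightarrow> mk u a b *v perp u = b *\<^sub>R perp u"
  unfolding unit2_def by (simp add: vec2_eq power2_eq_square) algebra

lemma unit_perp: "unit2 (perp u) = unit2 u" by (simp add: unit2_def add.commute)
lemma inner_u_perp: "u \<bullet> perp u = 0" "perp u \<bullet> u = 0" by (simp_all add: inner_2 algebra_simps)
lemma inner_uu: "unit2 u \<Longrightarrow> u \<bullet> u = 1" "unit2 u \<Longrightarrow> perp u \<bullet> perp u = 1"
  by (simp_all add: unit2_def inner_2 power2_eq_square algebra_simps)
lemma decomp: "unit2 u \<Longrightarrow> x = (u \<bullet> x) *\<^sub>R u + (perp u \<bullet> x) *\<^sub>R perp u"
  unfolding unit2_def by (simp add: vec2_eq inner_2 power2_eq_square) algebra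
lemma mk_mv: "mk u a b *v x = (a*(u \<bullet> x)) *\<^sub>R u + (b*(perp u \<bullet> x)) *\<^sub>R perp u"
  by (simp add: vec2_eq inner_2 algebra_simps)
lemma mk_quad: "x \<bullet> (mk u a b *v x) = a*(u \<bullet> x)^2 + b*(perp u \<bullet> x)^2"
  by (simp add: inner_2 power2_eq_square algebra_simps)
lemma pyth: "unit2 u \<Longrightarrow> (u \<bullet> x)^2 + (perp u \<bullet> x)^2 = x \<bullet> x"
  unfolding unit2_def by (simp add: inner_2 power2_eq_square) algebra
lemma frame_alg: assumes "cc * cc+ss * ss = (1::real)" "p * cc+q * ss = vv * cc" "q * cc+r * ss = vv * ss"
  shows "p = vv * cc * cc + (cc * (r * cc-q * ss) - ss * (q * cc-p * ss)) * ss * ss" "q = vv * cc * ss - (cc * (r * cc-q * ss) - ss * (q * cc-p * ss)) * ss * cc"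
   "q = vv * ss * cc - (cc * (r * cc-q * ss) - ss * (q * cc-p * ss)) * cc * ss" "r = vv * ss * ss + (cc * (r * cc-q * ss) - ss * (q * cc-p * ss)) * cc * cc"
  using assms by algebra+

lemma frame: assumes "sym2 A" "unit2 z" "A *v z = \<nu> *\<^sub>R z"
  shows "A = mk z \<nu> (perp z \<bullet> (A *v perp z))"
  using assms unfolding unit2_def sym2_c
  apply (simp add: vec2_eq mat2_eq inner_2 power2_eq_square)
  using frame_alg[of "z$1" "z$2" "A$1$1" "A$2$1" \<nu> "A$2$2"] by auto

lemma mk_trace: "unit2 u \<Longrightarrow> mk u a b $1$1 + mk u a b $2$2 = a + b"
  unfolding unit2_def by (simp add: power2_eq_square) algebra

lemma spectral: assumes "sym2 A" shows "\<exists>u l m. unit2 u \<and> m \<le> l \<and> A = mk u l m"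
proof -
  define p q r where "p = A$1$1" and "q = A$1$2" and "r = A$2$2"
  have q2: "A$2$1 = q" using assms by (simp add: sym2_c q_def)
  show ?thesis
  proof (cases "q = 0")
    case True
    show ?thesis
    proof (cases "r \<le> p")
      case True
      have "A = mk (vector[1,0]) p r" using \<open>q=0\<close> q2 by (simp add: mat2_eq p_def q_def r_def)
      moreover have "unit2 (vector[1,0])" by (simp add: unit2_def)
      ultimately show ?thesis using True by blast
    next
      case False
      have "A = mk (vector[0,1]) r p" using \<open>q=0\<close> q2 by (simp add: mat2_eq p_def q_def r_def)
      moreover have "unit2 (vector[0,1])" by (simp add: unit2_def)
      ultimately show ?thesis using False by (intro exI[of _ "vector[0,1]"] exI[of _ r] exI[of _ p]) auto
    qed
  next
    case False
    define rt where "rt = sqrt (((p-r)/2)^2 + q^2)"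
    have rt2: "rt^2 = ((p-r)/2)^2 + q^2" unfolding rt_def by simp
    have rt0: "rt \<ge> 0" unfolding rt_def by simp
    define l where "l = (p+r)/2 + rt"
    define v :: "real^2" where "v = vector[q, l - p]"
    define N where "N = sqrt (q^2 + (l-p)^2)"
    have Npos: "N > 0" unfolding N_def using False by (simp add: add_pos_nonneg)
    have N2: "N^2 = q^2 + (l-p)^2" unfolding N_def by simp
    define u where "u = (1/N) *\<^sub>R v"
    have un: "unit2 u" unfolding unit2_def u_def v_def using Npos N2 False
      by (simp add: power_divide add_divide_distrib[symmetric])
    have "q*q + r*(l-p) = l*(l-p)"
    proof -
      have "(l-p)*(l-r) = rt^2 - ((p-r)/2)^2" unfolding l_def by (simp add: power2_eq_square field_simps)
      then show ?thesis using rt2 by (simp add: power2_eq_square algebra_simps)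
    qed
    then have "A *v v = l *\<^sub>R v" using q2 unfolding v_def
      by (simp add: vec2_eq p_def q_def r_def algebra_simps)
    then have "A *v u = l *\<^sub>R u" unfolding u_def by (simp add: matrix_vector_mult_scaleR)
    from frame[OF assms un this] have Ae: "A = mk u l (perp u \<bullet> (A *v perp u))" .
    define t where "t = perp u \<bullet> (A *v perp u)"
    have "p + r = l + t" using mk_trace[OF un, of l t] Ae by (simp add: p_def r_def t_def)
    then have "t \<le> l" unfolding l_def using rt0 by (smt (verit) field_sum_of_halves)
    then show ?thesis using un Ae t_def by blast
  qed
qed

lemma mk_inner: "unit2 u \<Longrightarrow> u \<bullet> (mk u a b *v x) = a * (u \<bullet> x)"
  "unit2 u \<Longrightarrow> perp u \<bullet> (mk u a b *v x) = b * (perp u \<bullet> x)"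
  unfolding unit2_def by (simp_all add: inner_2 power2_eq_square, algebra, algebra)

lemma unit_nz: "unit2 u \<Longrightarrow> u \<noteq> 0" "unit2 u \<Longrightarrow> perp u \<noteq> 0"
  by (auto simp: unit2_def vec2_eq)

lemma eig_mk: assumes "unit2 u" shows "eigenvalues2 (mk u a b) = {a,b}"
proof
  show "eigenvalues2 (mk u a b) \<subseteq> {a,b}"
  proof
    fix l assume "l \<in> eigenvalues2 (mk u a b)"
    then obtain v where v: "v \<noteq> 0" "mk u a b *v v = l *\<^sub>R v" by (auto simp: eigenvalues2_def)
    have 1: "a * (u \<bullet> v) = l * (u \<bullet> v)" using mk_inner(1)[OF assms, of a b v] v(2) by auto
    have 2: "b * (perp u \<bullet> v) = l * (perp u \<bullet> v)" using mk_inner(2)[OF assms, of a b v] v(2) by auto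
    have "u \<bullet> v \<noteq> 0 \<or> perp u \<bullet> v \<noteq> 0" using decomp[OF assms, of v] v(1) by auto
    then show "l \<in> {a,b}" using 1 2 by auto
  qed
  show "{a,b} \<subseteq> eigenvalues2 (mk u a b)"
    using mk_u[OF assms] mk_pu[OF assms] unit_nz[OF assms] unfolding eigenvalues2_def by blast
qed

lemma lmax_mk: "unit2 u \<Longrightarrow> lmax (mk u a b) = max a b"
  and lmin_mk: "unit2 u \<Longrightarrow> lmin (mk u a b) = min a b"
  by (simp_all add: lmax_def lmin_def eig_mk)

lemma matfun_mk: assumes "unit2 u" shows "matfun f (mk u a b) = mk u (f a) (f b)"
  unfolding matfun_def
proof (rule the_equality)
  show "\<forall>v l. mk u a b *v v = l *\<^sub>R v \<longrightarrow> mk u (f a) (f b) *v v = f l *\<^sub>R v"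
  proof (intro allI impI)
    fix v l assume h: "mk u a b *v v = l *\<^sub>R v"
    have 1: "a * (u \<bullet> v) = l * (u \<bullet> v)" using mk_inner(1)[OF assms, of a b v] h by auto
    have 2: "b * (perp u \<bullet> v) = l * (perp u \<bullet> v)" using mk_inner(2)[OF assms, of a b v] h by auto
    have h1': "f a * (u \<bullet> v) = f l * (u \<bullet> v)" using 1 by (cases "u \<bullet> v = 0") (simp_all add: mult_right_cancel)
    have h2': "f b * (perp u \<bullet> v) = f l * (perp u \<bullet> v)" using 2 by (cases "perp u \<bullet> v = 0") (simp_all add: mult_right_cancel)
    have "mk u (f a) (f b) *v v = (f a * (u \<bullet> v)) *\<^sub>R u + (f b * (perp u \<bullet> v)) *\<^sub>R perp u"
      by (rule mk_mv)
    also have "\<dots> = f l *\<^sub>R ((u \<bullet> v) *\<^sub>R u + (perp u \<bullet> v) *\<^sub>R perp u)"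
      unfolding h1' h2' by (simp add: scaleR_add_right)
    also have "\<dots> = f l *\<^sub>R v" using decomp[OF assms, of v] by simp
    finally show "mk u (f a) (f b) *v v = f l *\<^sub>R v" .
  qed
next
  fix B assume h: "\<forall>v l. mk u a b *v v = l *\<^sub>R v \<longrightarrow> B *v v = f l *\<^sub>R v"
  have 1: "B *v u = f a *\<^sub>R u" using h mk_u[OF assms] by blast
  have 2: "B *v perp u = f b *\<^sub>R perp u" using h mk_pu[OF assms] by blast
  have "\<And>x. B *v x = mk u (f a) (f b) *v x"
  proof -
    fix x
    have "B *v x = B *v ((u \<bullet> x) *\<^sub>R u + (perp u \<bullet> x) *\<^sub>R perp u)" using decomp[OF assms, of x] by simp
    also have "\<dots> = (u \<bullet> x) *\<^sub>R (B *v u) + (perp u \<bullet> x) *\<^sub>R (B *v perp u)"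
      by (simp add: matrix_vector_right_distrib matrix_vector_mult_scaleR)
    also have "\<dots> = mk u (f a) (f b) *v x" using 1 2 by (simp add: mk_mv mult.commute)
    finally show "B *v x = mk u (f a) (f b) *v x" .
  qed
  then show "B = mk u (f a) (f b)" by (simp add: matrix_eq)
qed

lemma psd_mk: assumes "unit2 u" shows "psd2 (mk u a b) \<longleftrightarrow> a \<ge> 0 \<and> b \<ge> 0"
proof
  assume "psd2 (mk u a b)"
  then have "u \<bullet> (mk u a b *v u) \<ge> 0" "perp u \<bullet> (mk u a b *v perp u) \<ge> 0" by (auto simp: psd2_def)
  then show "a \<ge> 0 \<and> b \<ge> 0" using mk_u[OF assms] mk_pu[OF assms] inner_uu[OF assms] by simp
next
  assume "a \<ge> 0 \<and> b \<ge> 0"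
  then show "psd2 (mk u a b)" by (simp add: psd2_def mk_sym mk_quad)
qed

lemma mk_diff: "mk u a b - mk u c d = mk u (a-c) (b-d)"
  and mk_add: "mk u a b + mk u c d = mk u (a+c) (b+d)"
  and mk_scale: "t *\<^sub>R mk u a b = mk u (t*a) (t*b)"
  by (simp_all add: mat2_eq algebra_simps)
lemma mk_one: "unit2 u \<Longrightarrow> mat 1 = mk u 1 1"
  unfolding unit2_def by (simp add: mat2_eq power2_eq_square algebra_simps)



lemma unit_inner: "unit2 x \<longleftrightarrow> x \<bullet> x = 1"
  by (simp add: unit2_def inner_2 power2_eq_square)

lemma mk_quad_unit: "unit2 x \<Longrightarrow> unit2 u \<Longrightarrow> min a b \<le> x \<bullet> (mk u a b *v x) \<and> x \<bullet> (mk u a b *v x) \<le> max a b"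
proof -
  assume x: "unit2 x" and u: "unit2 u"
  have s: "(u \<bullet> x)^2 + (perp u \<bullet> x)^2 = 1" using pyth[OF u, of x] x by (simp add: unit_inner)
  have q: "x \<bullet> (mk u a b *v x) = a*(u \<bullet> x)^2 + b*(perp u \<bullet> x)^2" by (rule mk_quad)
  have n1: "(u \<bullet> x)^2 \<ge> 0" "(perp u \<bullet> x)^2 \<ge> 0" by simp_all
  have "min a b * ((u \<bullet> x)^2 + (perp u \<bullet> x)^2) \<le> a*(u \<bullet> x)^2 + b*(perp u \<bullet> x)^2"
    using n1 by (simp add: distrib_left add_mono mult_right_mono)
  moreover have "a*(u \<bullet> x)^2 + b*(perp u \<bullet> x)^2 \<le> max a b * ((u \<bullet> x)^2 + (perp u \<bullet> x)^2)"
    using n1 by (simp add: distrib_left add_mono mult_right_mono)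
  ultimately show ?thesis using s q by simp
qed

lemma rayleigh: assumes "sym2 A" "unit2 x"
  shows "lmin A \<le> x \<bullet> (A *v x)" "x \<bullet> (A *v x) \<le> lmax A"
proof -
  obtain u l m where u: "unit2 u" "m \<le> l" "A = mk u l m" using spectral[OF assms(1)] by blast
  show "lmin A \<le> x \<bullet> (A *v x)" "x \<bullet> (A *v x) \<le> lmax A"
    using mk_quad_unit[OF assms(2) u(1), of l m] u by (simp_all add: lmax_mk lmin_mk)
qed

lemma lmax_lmin_trace: assumes "sym2 A" shows "lmax A + lmin A = A$1$1 + A$2$2"
proof -
  obtain u l m where u: "unit2 u" "m \<le> l" "A = mk u l m" using spectral[OF assms(1)] by blast
  show ?thesis using u mk_trace[OF u(1), of l m] by (simp add: lmax_mk lmin_mk)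
qed

lemma lmax_eigvec: assumes "sym2 A" shows "\<exists>u. unit2 u \<and> u \<bullet> (A *v u) = lmax A"
proof -
  obtain u l m where u: "unit2 u" "m \<le> l" "A = mk u l m" using spectral[OF assms(1)] by blast
  show ?thesis using u mk_u[OF u(1), of l m] inner_uu[OF u(1)] by (intro exI[of _ u]) (simp add: lmax_mk)
qed

lemma lmin_eigvec: assumes "sym2 A" shows "\<exists>u. unit2 u \<and> u \<bullet> (A *v u) = lmin A"
proof -
  obtain u l m where u: "unit2 u" "m \<le> l" "A = mk u l m" using spectral[OF assms(1)] by blast
  show ?thesis using u mk_pu[OF u(1), of l m] inner_uu[OF u(1)] unit_perp[of u]
    by (intro exI[of _ "perp u"]) (simp add: lmin_mk)
qed

lemma loewner_quad: "loewner_le B A \<Longrightarrow> x \<bullet> (B *v x) \<le> x \<bullet> (A *v x)"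
  unfolding loewner_le_def psd2_def
  by (auto simp: matrix_vector_mult_diff_rdistrib inner_diff_right)

lemma scaleR_mv: "((t::real) *\<^sub>R (A::mat2)) *v x = t *\<^sub>R (A *v x)" by (simp add: vec2_eq algebra_simps)

lemma sym2_add: "sym2 A \<Longrightarrow> sym2 B \<Longrightarrow> sym2 (A + B)" by (simp add: sym2_c)
lemma sym2_diff: "sym2 A \<Longrightarrow> sym2 B \<Longrightarrow> sym2 (A - B)" by (simp add: sym2_c)
lemma sym2_scale: "sym2 A \<Longrightarrow> sym2 (t *\<^sub>R A)" by (simp add: sym2_c)

lemma part1: assumes "sym2 A" "sym2 B" "loewner_le B A" shows "lexle (phi B) (phi A)"
proof -
  obtain u where u: "unit2 u" "u \<bullet> (B *v u) = lmax B" using lmax_eigvec[OF assms(2)] by blast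
  obtain w where w: "unit2 w" "w \<bullet> (A *v w) = lmin A" using lmin_eigvec[OF assms(1)] by blast
  have "lmax B \<le> lmax A" using u loewner_quad[OF assms(3), of u] rayleigh(2)[OF assms(1) u(1)] by linarith
  moreover have "lmin B \<le> lmin A" using w loewner_quad[OF assms(3), of w] rayleigh(1)[OF assms(2) w(1)] by linarith
  ultimately show ?thesis by (auto simp: lexle_def phi_def)
qed

lemma part2: assumes "sym2 Y1" "sym2 Y2" "0 \<le> \<alpha>" "\<alpha> \<le> 1"
  shows "lexle (0, 0) (\<alpha> *\<^sub>R phi Y1 + (1 - \<alpha>) *\<^sub>R phi Y2 - phi (\<alpha> *\<^sub>R Y1 + (1 - \<alpha>) *\<^sub>R Y2))"
proof -
  let ?Y = "\<alpha> *\<^sub>R Y1 + (1 - \<alpha>) *\<^sub>R Y2"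
  have sY: "sym2 ?Y" using assms by (simp add: sym2_add sym2_scale)
  obtain u where u: "unit2 u" "u \<bullet> (?Y *v u) = lmax ?Y" using lmax_eigvec[OF sY] by blast
  have e: "u \<bullet> (?Y *v u) = \<alpha> * (u \<bullet> (Y1 *v u)) + (1-\<alpha>) * (u \<bullet> (Y2 *v u))"
    by (simp add: matrix_vector_mult_add_rdistrib inner_add_right scaleR_mv)
  have "\<alpha> * (u \<bullet> (Y1 *v u)) \<le> \<alpha> * lmax Y1" using rayleigh(2)[OF assms(1) u(1)] assms(3) by (rule mult_left_mono)
  moreover have "(1-\<alpha>) * (u \<bullet> (Y2 *v u)) \<le> (1-\<alpha>) * lmax Y2" using rayleigh(2)[OF assms(2) u(1)] assms(4)
    by (intro mult_left_mono) auto
  ultimately have d1: "lmax ?Y \<le> \<alpha> * lmax Y1 + (1-\<alpha>) * lmax Y2" using u e by linarith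
  have tr: "lmax ?Y + lmin ?Y = \<alpha> * (lmax Y1 + lmin Y1) + (1-\<alpha>) * (lmax Y2 + lmin Y2)"
    using lmax_lmin_trace[OF sY] lmax_lmin_trace[OF assms(1)] lmax_lmin_trace[OF assms(2)]
    by (simp add: algebra_simps)
  show ?thesis unfolding lexle_def phi_def using d1 tr
    by (auto simp: algebra_simps)
qed



lemma perp_scale: "perp (t *\<^sub>R u) = t *\<^sub>R perp u" by (simp add: vec2_eq)
lemma perp_perp: "perp (perp u) = - u" by (simp add: vec2_eq)
lemma perp_inner_swap: "perp u \<bullet> perp w = u \<bullet> w" by (simp add: inner_2 algebra_simps)

lemma par_lemma: assumes u: "unit2 u" and w: "unit2 w" and h: "perp u \<bullet> w = 0"
  shows "(w \<bullet> x)^2 = (u \<bullet> x)^2" "(perp w \<bullet> x)^2 = (perp u \<bullet> x)^2" "perp u \<bullet> perp w \<noteq> 0"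
proof -
  have wd: "w = (u \<bullet> w) *\<^sub>R u" using decomp[OF u, of w] h by simp
  have "1 = w \<bullet> w" using w by (simp add: unit_inner)
  also have "\<dots> = (u \<bullet> w)^2 * (u \<bullet> u)" by (subst (1 2) wd) (simp add: power2_eq_square)
  finally have t: "(u \<bullet> w)^2 = 1" using inner_uu[OF u] by simp
  have "w \<bullet> x = (u \<bullet> w) * (u \<bullet> x)" by (subst wd) simp
  then show "(w \<bullet> x)^2 = (u \<bullet> x)^2" using t by (simp add: power_mult_distrib)
  have "perp w = (u \<bullet> w) *\<^sub>R perp u" by (subst wd) (simp add: perp_scale)
  then have "perp w \<bullet> x = (u \<bullet> w) * (perp u \<bullet> x)" by simp
  then show "(perp w \<bullet> x)^2 = (perp u \<bullet> x)^2" using t by (simp add: power_mult_distrib)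
  have "u \<bullet> w \<noteq> 0" using t by auto
  then show "perp u \<bullet> perp w \<noteq> 0" by (simp add: perp_inner_swap)
qed

lemma key_ineq:
  assumes u: "unit2 u" and w: "unit2 w" and p: "p > 0"
    and s: "0 \<le> \<sigma>" "\<sigma> \<le> l" and a: "0 \<le> \<alpha>" "\<alpha> \<le> l" and b: "0 \<le> \<beta>" "\<beta> \<le> l"
    and ha: "perp u \<bullet> w \<noteq> 0 \<longrightarrow> \<alpha> \<le> \<sigma>" and hb: "perp u \<bullet> perp w \<noteq> 0 \<longrightarrow> \<beta> \<le> \<sigma>"
  shows "\<alpha> powr p * (w \<bullet> x)^2 + \<beta> powr p * (perp w \<bullet> x)^2 \<le> l powr p * (u \<bullet> x)^2 + \<sigma> powr p * (perp u \<bullet> x)^2"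
proof -
  have mono: "\<And>x y. 0 \<le> x \<Longrightarrow> x \<le> y \<Longrightarrow> x powr p \<le> y powr p" using p by (intro powr_mono2) auto
  have sl: "\<sigma> powr p \<le> l powr p" using mono s by simp
  have sq: "\<And>z. 0 \<le> (z::real)^2" by simp
  show ?thesis
  proof (cases "\<alpha> \<le> \<sigma> \<and> \<beta> \<le> \<sigma>")
    case True
    have "\<alpha> powr p * (w \<bullet> x)^2 + \<beta> powr p * (perp w \<bullet> x)^2 \<le> \<sigma> powr p * (w \<bullet> x)^2 + \<sigma> powr p * (perp w \<bullet> x)^2"
      using True mono a b by (intro add_mono mult_right_mono) auto
    also have "\<dots> = \<sigma> powr p * ((u \<bullet> x)^2 + (perp u \<bullet> x)^2)"
      using pyth[OF w, of x] pyth[OF u, of x] by (simp add: distrib_left[symmetric])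
    also have "\<dots> \<le> l powr p * (u \<bullet> x)^2 + \<sigma> powr p * (perp u \<bullet> x)^2"
      using sl by (simp add: distrib_left mult_right_mono)
    finally show ?thesis .
  next
    case False
    show ?thesis
    proof (cases "\<sigma> < \<alpha>")
      case True
      then have h0: "perp u \<bullet> w = 0" using ha by auto
      note pl = par_lemma[OF u w h0]
      have "\<beta> \<le> \<sigma>" using hb pl(3) by auto
      then have i2: "\<beta> powr p \<le> \<sigma> powr p" using mono b by auto
      have i1: "\<alpha> powr p \<le> l powr p" using mono a by auto
      have "\<alpha> powr p * (w \<bullet> x)^2 \<le> l powr p * (u \<bullet> x)^2" using i1 pl(1)[of x] by (simp add: mult_right_mono)
      moreover have "\<beta> powr p * (perp w \<bullet> x)^2 \<le> \<sigma> powr p * (perp u \<bullet> x)^2" using i2 pl(2)[of x] by (simp add: mult_right_mono)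
      ultimately show ?thesis by (rule add_mono)
    next
      case False2: False
      then have "\<sigma> < \<beta>" using False by auto
      then have h0: "perp u \<bullet> perp w = 0" using hb by auto
      note pl = par_lemma[OF u _ h0]
      have uw: "unit2 (perp w)" using w by (simp add: unit_perp)
      have "perp u \<bullet> perp (perp w) \<noteq> 0" using pl(3)[OF uw] .
      then have "perp u \<bullet> w \<noteq> 0" by (simp add: perp_perp)
      then have "\<alpha> \<le> \<sigma>" using ha by auto
      then have i2: "\<alpha> powr p \<le> \<sigma> powr p" using mono a by auto
      have i1: "\<beta> powr p \<le> l powr p" using mono b by auto
      have pp: "(perp (perp w) \<bullet> x)^2 = (w \<bullet> x)^2" by (simp add: perp_perp)
      have "\<beta> powr p * (perp w \<bullet> x)^2 \<le> l powr p * (u \<bullet> x)^2" using i1 pl(1)[OF uw, of x] by (simp add: mult_right_mono)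
      moreover have "\<alpha> powr p * (w \<bullet> x)^2 \<le> \<sigma> powr p * (perp u \<bullet> x)^2" using i2 pl(2)[OF uw, of x] pp by (simp add: mult_right_mono)
      ultimately show ?thesis by linarith
    qed
  qed
qed

lemma mpow_mk: "unit2 w \<Longrightarrow> mpow p (mk w a b) = mk w (a powr p) (b powr p)"
  by (simp add: mpow_def matfun_mk)

lemma psd_diff_quad: assumes "sym2 A" "sym2 B" "\<And>x. x \<bullet> (B *v x) \<le> x \<bullet> (A *v x)"
  shows "psd2 (A - B)"
  using assms by (simp add: psd2_def sym2_diff matrix_vector_mult_diff_rdistrib inner_diff_right)

lemma psd_kernel: assumes "psd2 D" "x \<bullet> (D *v x) = 0" shows "D *v x = 0"
proof -
  obtain w a b where w: "unit2 w" "b \<le> a" "D = mk w a b" using spectral assms(1) psd2_def by blast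
  have ab: "a \<ge> 0" "b \<ge> 0" using assms(1) w psd_mk by auto
  have "a*(w \<bullet> x)^2 + b*(perp w \<bullet> x)^2 = 0" using assms(2) w(3) mk_quad by simp
  moreover have "a*(w \<bullet> x)^2 \<ge> 0" "b*(perp w \<bullet> x)^2 \<ge> 0" using ab by simp_all
  ultimately have "a*(w \<bullet> x)^2 = 0" "b*(perp w \<bullet> x)^2 = 0" by linarith+
  then have z1: "a*(w \<bullet> x) = 0" and z2: "b*(perp w \<bullet> x) = 0" by (auto simp: power2_eq_square)
  show ?thesis unfolding w(3) mk_mv z1 z2 by simp
qed

locale ctx =
  fixes XX :: "mat2 multiset" and u1 :: "real^2" and l1 \<sigma> \<mu>1 :: real
  assumes symm: "\<forall>A\<in>#XX. sym2 A"
    and u1: "unit2 u1"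
    and A1: "mk u1 l1 \<mu>1 \<in># XX"
    and mu1: "\<mu>1 \<le> \<sigma>"
    and bound: "\<And>A z \<nu>. A \<in># XX \<Longrightarrow> unit2 z \<Longrightarrow> A *v z = \<nu> *\<^sub>R z \<Longrightarrow> \<nu> \<le> l1 \<and> (perp u1 \<bullet> z \<noteq> 0 \<longrightarrow> \<nu> \<le> \<sigma>)"
    and wit: "\<exists>A\<in>#XX. \<exists>z. unit2 z \<and> A *v z = \<sigma> *\<^sub>R z \<and> perp u1 \<bullet> z \<noteq> 0"
    and sl: "\<sigma> < l1"
begin

definition "S = mk u1 l1 \<sigma>"

lemma decompA: "A \<in># XX \<Longrightarrow> \<exists>w \<alpha> \<beta>. unit2 w \<and> A = mk w \<alpha> \<beta>"
  using spectral symm by blast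

lemma eigs_of_mk: assumes "mk w \<alpha> \<beta> \<in># XX" "unit2 w"
  shows "\<alpha> \<le> l1" "\<beta> \<le> l1" "perp u1 \<bullet> w \<noteq> 0 \<longrightarrow> \<alpha> \<le> \<sigma>" "perp u1 \<bullet> perp w \<noteq> 0 \<longrightarrow> \<beta> \<le> \<sigma>"
  using bound[OF assms(1) assms(2) mk_u[OF assms(2)]] bound[OF assms(1) _ mk_pu[OF assms(2)]] assms(2)
  by (auto simp: unit_perp)

context
  assumes NN: "\<And>A z \<nu>. A \<in># XX \<Longrightarrow> unit2 z \<Longrightarrow> A *v z = \<nu> *\<^sub>R z \<Longrightarrow> 0 \<le> \<nu>"
begin

lemma sigma_nn: "0 \<le> \<sigma>" using wit NN by blast

lemma S_in: "S \<in> UB_star0 XX"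
  unfolding UB_star0_def
proof (intro InterI, clarsimp)
  fix p :: real assume p: "p > 0"
  have psdS: "psd2 S" unfolding S_def using psd_mk[OF u1] sigma_nn sl by simp
  have "\<forall>A\<in>#XX. loewner_le (mpow p A) (mpow p S)"
  proof
    fix A assume A: "A \<in># XX"
    obtain w \<alpha> \<beta> where w: "unit2 w" "A = mk w \<alpha> \<beta>" using decompA[OF A] by blast
    note e = eigs_of_mk[OF A[unfolded w(2)] w(1)]
    have a0: "0 \<le> \<alpha>" using NN[OF A w(1)] mk_u[OF w(1)] w(2) by simp
    have upw: "unit2 (perp w)" using w(1) by (simp add: unit_perp)
    have b0: "0 \<le> \<beta>" using NN[OF A upw, of \<beta>] mk_pu[OF w(1), of \<alpha> \<beta>] w(2) by simp
    show "loewner_le (mpow p A) (mpow p S)"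
      unfolding loewner_le_def w(2) S_def mpow_mk[OF w(1)] mpow_mk[OF u1]
    proof (rule psd_diff_quad[OF mk_sym mk_sym])
      fix x
      show "x \<bullet> (mk w (\<alpha> powr p) (\<beta> powr p) *v x) \<le> x \<bullet> (mk u1 (l1 powr p) (\<sigma> powr p) *v x)"
        unfolding mk_quad
        using key_ineq[OF u1 w(1) p sigma_nn _ a0 e(1) b0 e(2) e(3) e(4)] sl by simp
    qed
  qed
  then show "S \<in> UB_p p XX" unfolding UB_p_def UB_def using psdS
    by (simp add: S_def mpow_mk[OF u1] mk_sym)
qed


lemma phiS: "phi S = (l1, \<sigma>)" using sl by (simp add: S_def phi_def lmax_mk[OF u1] lmin_mk[OF u1])

lemma A1_nn: "0 \<le> l1" "0 \<le> \<mu>1"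
  using NN[OF A1 u1 mk_u[OF u1]] NN[OF A1 _ mk_pu[OF u1]] u1 by (auto simp: unit_perp)

lemma S_min: assumes Y: "Y \<in> UB_star0 XX"
  shows "lexle (phi S) (phi Y) \<and> (lexle (phi Y) (phi S) \<longrightarrow> Y = S)"
proof -
  have Yp: "\<And>p. p > 0 \<Longrightarrow> Y \<in> UB_p p XX" using Y by (auto simp: UB_star0_def)
  have Y1: "psd2 Y" "\<forall>A\<in>#XX. loewner_le (mpow 1 A) (mpow 1 Y)"
    using Yp[of 1] by (auto simp: UB_p_def UB_def)
  obtain v a b where v: "unit2 v" "b \<le> a" "Y = mk v a b" using spectral Y1(1) psd2_def by blast
  have ab: "0 \<le> a" "0 \<le> b" using psd_mk[OF v(1)] Y1(1) v(3) by auto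
  have mY: "mpow 1 Y = Y" using v ab by (simp add: mpow_mk)
  have mA1: "mpow 1 (mk u1 l1 \<mu>1) = mk u1 l1 \<mu>1" using A1_nn by (simp add: mpow_mk[OF u1])
  have LA: "loewner_le (mk u1 l1 \<mu>1) Y" using Y1(2) A1 mY mA1 by metis
  have qA: "u1 \<bullet> (mk u1 l1 \<mu>1 *v u1) = l1" using mk_u[OF u1] inner_uu[OF u1] by simp
  have q1: "l1 \<le> u1 \<bullet> (Y *v u1)" using loewner_quad[OF LA, of u1] qA by simp
  have symY: "sym2 Y" using Y1(1) psd2_def by blast
  have lm: "u1 \<bullet> (Y *v u1) \<le> lmax Y" using rayleigh(2)[OF symY u1] .
  show ?thesis
  proof (cases "l1 < lmax Y")
    case True
    then show ?thesis using phiS by (auto simp: lexle_def phi_def)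
  next
    case False
    then have eq: "lmax Y = l1" using q1 lm by linarith
    let ?D = "Y - mk u1 l1 \<mu>1"
    have pD: "psd2 ?D" using LA loewner_le_def by blast
    have "u1 \<bullet> (?D *v u1) = u1 \<bullet> (Y *v u1) - l1"
      using qA by (simp add: matrix_vector_mult_diff_rdistrib inner_diff_right)
    moreover have "u1 \<bullet> (?D *v u1) \<ge> 0" using pD psd2_def by blast
    ultimately have "u1 \<bullet> (?D *v u1) = 0" using eq lm by linarith
    then have "?D *v u1 = 0" using psd_kernel[OF pD] by blast
    then have "Y *v u1 = l1 *\<^sub>R u1" using mk_u[OF u1, of l1 \<mu>1]
      by (simp add: matrix_vector_mult_diff_rdistrib)
    from frame[OF symY u1 this] obtain s where Ys: "Y = mk u1 l1 s" by blast
    have sl1: "s \<le> l1" using eq Ys by (simp add: lmax_mk[OF u1])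
    have s0: "0 \<le> s" using Y1(1) Ys psd_mk[OF u1] by simp
    have phiY: "phi Y = (l1, s)" using Ys sl1 by (simp add: phi_def lmax_mk[OF u1] lmin_mk[OF u1])
    have ss: "\<sigma> \<le> s"
    proof (rule ccontr)
      assume "\<not> \<sigma> \<le> s"
      then have lt: "s < \<sigma>" by simp
      obtain A z where Az: "A \<in># XX" "unit2 z" "A *v z = \<sigma> *\<^sub>R z" "perp u1 \<bullet> z \<noteq> 0" using wit by blast
      have symA: "sym2 A" using symm Az(1) by blast
      obtain \<beta> where Aeq: "A = mk z \<sigma> \<beta>" using frame[OF symA Az(2,3)] by blast
      have upz: "unit2 (perp z)" using Az(2) by (simp add: unit_perp)
      have b0: "0 \<le> \<beta>" using NN[OF Az(1) upz, of \<beta>] mk_pu[OF Az(2), of \<sigma> \<beta>] Aeq by simp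
      define c where "c = (z \<bullet> perp u1)^2"
      have c0: "c > 0" using Az(4) by (simp add: c_def inner_commute)
      have spos: "\<sigma> > 0" using lt s0 by linarith
      have ineq: "\<sigma> powr real n * c \<le> s powr real n" if n: "n \<ge> 1" for n :: nat
      proof -
        have "Y \<in> UB_p (real n) XX" using Yp n by simp
        then have "loewner_le (mpow (real n) A) (mpow (real n) Y)" using Az(1) by (auto simp: UB_p_def UB_def)
        then have L: "loewner_le (mk z (\<sigma> powr n) (\<beta> powr n)) (mk u1 (l1 powr n) (s powr n))"
          using Aeq Ys by (simp add: mpow_mk[OF Az(2)] mpow_mk[OF u1])
        have "perp u1 \<bullet> (mk u1 (l1 powr n) (s powr n) *v perp u1) = s powr n"
          using mk_pu[OF u1] inner_uu[OF u1] by simp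
        moreover have "perp u1 \<bullet> (mk z (\<sigma> powr n) (\<beta> powr n) *v perp u1) \<ge> \<sigma> powr n * c"
          unfolding mk_quad c_def by (simp add: inner_commute)
        ultimately show ?thesis using loewner_quad[OF L, of "perp u1"] by linarith
      qed
      have "(\<lambda>n. (s/\<sigma>)^n) \<longlonglongrightarrow> 0" using lt s0 spos by (intro LIMSEQ_power_zero) simp
      then have "eventually (\<lambda>n. (s/\<sigma>)^n < c) sequentially" using c0 by (rule order_tendstoD)
      then obtain N where N: "\<And>n. n \<ge> N \<Longrightarrow> (s/\<sigma>)^n < c" by (auto simp: eventually_sequentially)
      define n where "n = max N 1"
      have n1: "n \<ge> 1" "n \<ge> N" by (auto simp: n_def)
      have I: "\<sigma> powr real n * c \<le> s powr real n" using ineq n1 by simp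
      show False
      proof (cases "s = 0")
        case True
        have "\<sigma> powr real n > 0" using spos by simp
        then have "\<sigma> powr real n * c > 0" using c0 by simp
        then show False using I True by simp
      next
        case False
        then have sp: "s > 0" using s0 by simp
        have "\<sigma>^n * c \<le> s^n" using I sp spos by (simp add: powr_realpow)
        then have "c \<le> s^n / \<sigma>^n" using spos by (simp add: field_simps)
        then have "c \<le> (s/\<sigma>)^n" by (simp add: power_divide)
        then show False using N[OF n1(2)] by simp
      qed
    qed
    show ?thesis
    proof
      show "lexle (phi S) (phi Y)" using phiS phiY ss by (simp add: lexle_def)
      show "lexle (phi Y) (phi S) \<longrightarrow> Y = S" using phiS phiY ss Ys S_def by (auto simp: lexle_def)
    qed
  qed
qed

end
end



lemma mk_bil: "x \<bullet> (mk w a b *v y) = a * (w \<bullet> x) * (w \<bullet> y) + b * (perp w \<bullet> x) * (perp w \<bullet> y)"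
  by (simp add: inner_2 algebra_simps)

lemma sum_mset_mv_inner: "x \<bullet> ((\<Sum>A\<in>#XX. f A) *v y) = (\<Sum>A\<in>#XX. x \<bullet> ((f A :: mat2) *v y))"
  by (induction XX) (simp_all add: matrix_vector_mult_add_rdistrib inner_add_right)

lemma sum_mset_sym: "(\<And>A. A \<in># XX \<Longrightarrow> sym2 (f A)) \<Longrightarrow> sym2 (\<Sum>A\<in>#XX. f A)"
  by (induction XX) (auto simp: sym2_c)

lemma sum_mset_abs_bound: "(\<And>A. A \<in># XX \<Longrightarrow> \<bar>g A\<bar> \<le> (K::real)) \<Longrightarrow> \<bar>\<Sum>A\<in>#XX. g A\<bar> \<le> real (size XX) * K"
proof (induction XX)
  case empty then show ?case by simp
next
  case (add x XX)
  have "\<bar>g x + (\<Sum>A\<in>#XX. g A)\<bar> \<le> \<bar>g x\<bar> + \<bar>\<Sum>A\<in>#XX. g A\<bar>" by (rule abs_triangle_ineq)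
  also have "\<dots> \<le> K + real (size XX) * K" using add by (intro add_mono) auto
  finally show ?case by (simp add: algebra_simps)
qed

lemma sum_mset_nonneg': "(\<And>A. A \<in># XX \<Longrightarrow> 0 \<le> g A) \<Longrightarrow> 0 \<le> (\<Sum>A\<in>#XX. (g A :: real))"
  by (induction XX) auto

lemma sum_mset_ge_member: assumes "(\<And>A. A \<in># XX \<Longrightarrow> 0 \<le> g A)" "A0 \<in># XX"
  shows "g A0 \<le> (\<Sum>A\<in>#XX. (g A :: real))"
proof -
  obtain XX' where X: "XX = add_mset A0 XX'" using assms(2) by (metis multi_member_split)
  have "0 \<le> (\<Sum>A\<in>#XX'. g A)" using assms(1) X by (intro sum_mset_nonneg') auto
  then show ?thesis using X by simp
qed

lemma sym_swap: "sym2 M \<Longrightarrow> x \<bullet> (M *v y) = y \<bullet> (M *v x)"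
  by (simp add: sym2_c inner_2 algebra_simps)

lemma det_alg: assumes "cc * cc + ss * ss = (1::real)"
  shows "(cc * (p * cc + q * ss) + ss * (q * cc + r * ss)) * ((- ss) * (p * (- ss) + q * cc) + cc * (q * (- ss) + r * cc))
     - (cc * (p * (- ss) + q * cc) + ss * (q * (- ss) + r * cc))^2 = p * r - q * q"
  using assms by algebra

lemma det_frame: assumes "sym2 M" "unit2 u"
  shows "(u \<bullet> (M *v u)) * (perp u \<bullet> (M *v perp u)) - (u \<bullet> (M *v perp u))^2 = M$1$1 * M$2$2 - M$1$2 * M$1$2"
proof -
  have q: "M$2$1 = M$1$2" using assms(1) by (simp add: sym2_c)
  have "u$1 * u$1 + u$2 * u$2 = 1" using assms(2) by (simp add: unit2_def power2_eq_square)
  from det_alg[OF this, of "M$1$1" "M$1$2" "M$2$2"] show ?thesis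
    by (simp add: inner_2 q)
qed

lemma abs_inner_le1: assumes "unit2 w" "unit2 x" shows "\<bar>w \<bullet> x\<bar> \<le> 1"
proof -
  have "(w \<bullet> x)^2 + (perp w \<bullet> x)^2 = 1" using pyth[OF assms(1)] assms(2) by (simp add: unit_inner)
  then have "(w \<bullet> x)^2 \<le> 1" by (smt (verit) zero_le_power2)
  then show ?thesis by (simp add: abs_square_le_1)
qed

lemma mat2_tendsto:
  assumes "(\<lambda>m. f m $1$1) \<longlonglongrightarrow> L$1$1" "(\<lambda>m. f m $1$2) \<longlonglongrightarrow> L$1$2"
    "(\<lambda>m. f m $2$1) \<longlonglongrightarrow> L$2$1" "(\<lambda>m. f m $2$2) \<longlonglongrightarrow> (L::mat2)$2$2"
  shows "f \<longlonglongrightarrow> L"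
proof (rule vec_tendstoI)
  fix i :: 2
  show "(\<lambda>m. f m $ i) \<longlonglongrightarrow> L $ i"
  proof (rule vec_tendstoI)
    fix j :: 2
    show "(\<lambda>m. f m $ i $ j) \<longlonglongrightarrow> L $ i $ j"
      using assms exhaust_2[of i] exhaust_2[of j] by auto
  qed
qed

lemma mk_lim:
  assumes V: "\<And>m. V m = x m *\<^sub>R u + y m *\<^sub>R perp u"
    and hx: "(\<lambda>m. (x m)^2) \<longlonglongrightarrow> 1" and hxy: "(\<lambda>m. x m * y m) \<longlonglongrightarrow> 0" and hy: "(\<lambda>m. (y m)^2) \<longlonglongrightarrow> 0"
    and P: "P \<longlonglongrightarrow> p0" and Q: "Q \<longlonglongrightarrow> q0"
  shows "(\<lambda>m. mk (V m) (P m) (Q m)) \<longlonglongrightarrow> mk u p0 q0"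
proof -
  have c1: "V m $1 = x m * u$1 - y m * u$2" "V m $2 = x m * u$2 + y m * u$1" for m by (simp_all add: V)
  let ?a = "\<lambda>m. (x m)^2 * (u$1*u$1) - 2 * (x m * y m) * (u$1*u$2) + (y m)^2 * (u$2*u$2)"
  let ?b = "\<lambda>m. (x m)^2 * (u$1*u$2) + (x m * y m) * (u$1*u$1 - u$2*u$2) - (y m)^2 * (u$1*u$2)"
  let ?c = "\<lambda>m. (x m)^2 * (u$2*u$2) + 2 * (x m * y m) * (u$1*u$2) + (y m)^2 * (u$1*u$1)"
  have e1: "V m $1 * V m $1 = ?a m" "V m $1 * V m $2 = ?b m" "V m $2 * V m $2 = ?c m" for m
    unfolding c1 by (simp_all add: power2_eq_square algebra_simps)
  have la: "?a \<longlonglongrightarrow> 1 * (u$1*u$1) - 2 * 0 * (u$1*u$2) + 0 * (u$2*u$2)"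
    by (intro tendsto_intros hx hxy hy)
  have lb: "?b \<longlonglongrightarrow> 1 * (u$1*u$2) + 0 * (u$1*u$1 - u$2*u$2) - 0 * (u$1*u$2)"
    by (intro tendsto_intros hx hxy hy)
  have lc: "?c \<longlonglongrightarrow> 1 * (u$2*u$2) + 2 * 0 * (u$1*u$2) + 0 * (u$1*u$1)"
    by (intro tendsto_intros hx hxy hy)
  have E: "mk (V m) (P m) (Q m) $1$1 = P m * (V m $1 * V m $1) + Q m * (V m $2 * V m $2)"
    "mk (V m) (P m) (Q m) $1$2 = P m * (V m $1 * V m $2) - Q m * (V m $1 * V m $2)"
    "mk (V m) (P m) (Q m) $2$1 = P m * (V m $1 * V m $2) - Q m * (V m $1 * V m $2)"
    "mk (V m) (P m) (Q m) $2$2 = P m * (V m $2 * V m $2) + Q m * (V m $1 * V m $1)" for m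
    by (simp_all add: algebra_simps)
  show ?thesis
    apply (rule mat2_tendsto)
    unfolding E e1
    using tendsto_add[OF tendsto_mult[OF P la] tendsto_mult[OF Q lc]]
      tendsto_diff[OF tendsto_mult[OF P lb] tendsto_mult[OF Q lb]]
      tendsto_add[OF tendsto_mult[OF P lc] tendsto_mult[OF Q la]]
    by (simp_all add: algebra_simps)
qed


lemma abs_prod_le: "0 \<le> (e::real) \<Longrightarrow> e \<le> K \<Longrightarrow> \<bar>p1\<bar> \<le> 1 \<Longrightarrow> \<bar>q1\<bar> \<le> 1 \<Longrightarrow> \<bar>e*p1*q1\<bar> \<le> K"
proof -
  assume h: "0 \<le> e" "e \<le> K" "\<bar>p1\<bar> \<le> 1" "\<bar>q1\<bar> \<le> 1"
  have "\<bar>p1*q1\<bar> \<le> 1" using h by (simp add: abs_mult mult_le_one)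
  then have "\<bar>e*(p1*q1)\<bar> \<le> e * 1" using h(1) by (simp add: abs_mult mult_left_le)
  then show ?thesis using h(2) by (simp add: mult.assoc)
qed

context ctx begin

lemma term_facts: assumes "A \<in># XX"
  shows "\<exists>w \<alpha> \<beta>. unit2 w \<and> matfun exp (real m *\<^sub>R A) = mk w (exp (real m*\<alpha>)) (exp (real m*\<beta>))
     \<and> \<alpha> \<le> l1 \<and> \<beta> \<le> l1 \<and> (perp u1 \<bullet> w \<noteq> 0 \<longrightarrow> \<alpha> \<le> \<sigma>) \<and> (perp u1 \<bullet> perp w \<noteq> 0 \<longrightarrow> \<beta> \<le> \<sigma>)"
proof -
  obtain w \<alpha> \<beta> where w: "unit2 w" "A = mk w \<alpha> \<beta>" using decompA[OF assms] by blast
  note e = eigs_of_mk[OF assms[unfolded w(2)] w(1)]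
  have "matfun exp (real m *\<^sub>R A) = mk w (exp (real m*\<alpha>)) (exp (real m*\<beta>))"
    using w by (simp add: mk_scale matfun_mk)
  then show ?thesis using w e by blast
qed

lemma term_bounds: fixes m :: nat assumes A: "A \<in># XX" and x: "unit2 x"
  defines "T \<equiv> matfun exp (real m *\<^sub>R A)"
  shows "0 \<le> u1 \<bullet> (T *v u1)" "u1 \<bullet> (T *v u1) \<le> exp (real m * l1)"
    "\<bar>x \<bullet> (T *v perp u1)\<bar> \<le> 2 * exp (real m * \<sigma>)" "0 \<le> perp u1 \<bullet> (T *v perp u1)" "sym2 T"
proof -
  obtain w \<alpha> \<beta> where w: "unit2 w" "T = mk w (exp (real m*\<alpha>)) (exp (real m*\<beta>))"
     "\<alpha> \<le> l1" "\<beta> \<le> l1" "perp u1 \<bullet> w \<noteq> 0 \<longrightarrow> \<alpha> \<le> \<sigma>" "perp u1 \<bullet> perp w \<noteq> 0 \<longrightarrow> \<beta> \<le> \<sigma>"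
    using term_facts[OF A, of m] unfolding T_def by blast
  have upw: "unit2 (perp w)" using w(1) by (simp add: unit_perp)
  have upu: "unit2 (perp u1)" using u1 by (simp add: unit_perp)
  show "sym2 T" using w(2) mk_sym by simp
  have qa: "u1 \<bullet> (T *v u1) = exp (real m*\<alpha>) * (w \<bullet> u1)^2 + exp (real m*\<beta>) * (perp w \<bullet> u1)^2"
    using w(2) mk_quad by simp
  show "0 \<le> u1 \<bullet> (T *v u1)" using qa by simp
  have ea: "exp (real m*\<alpha>) \<le> exp (real m * l1)" "exp (real m*\<beta>) \<le> exp (real m * l1)"
    using w(3,4) by (simp_all add: mult_left_mono)
  have "u1 \<bullet> (T *v u1) \<le> exp (real m * l1) * (w \<bullet> u1)^2 + exp (real m * l1) * (perp w \<bullet> u1)^2"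
    unfolding qa using ea by (intro add_mono mult_right_mono) auto
  also have "\<dots> = exp (real m * l1)" using pyth[OF w(1), of u1] u1
    by (simp add: distrib_left[symmetric] unit_inner)
  finally show "u1 \<bullet> (T *v u1) \<le> exp (real m * l1)" .
  show "0 \<le> perp u1 \<bullet> (T *v perp u1)" using w(2) mk_quad by simp
  have b1: "\<bar>exp (real m*\<alpha>) * (w \<bullet> x) * (w \<bullet> perp u1)\<bar> \<le> exp (real m * \<sigma>)"
  proof (cases "w \<bullet> perp u1 = 0")
    case False
    then have "\<alpha> \<le> \<sigma>" using w(5) by (simp add: inner_commute)
    then show ?thesis using abs_inner_le1[OF w(1) x] abs_inner_le1[OF w(1) upu]
      by (intro abs_prod_le) (auto simp: mult_left_mono)
  qed simp
  have b2: "\<bar>exp (real m*\<beta>) * (perp w \<bullet> x) * (perp w \<bullet> perp u1)\<bar> \<le> exp (real m * \<sigma>)"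
  proof (cases "perp w \<bullet> perp u1 = 0")
    case False
    then have "\<beta> \<le> \<sigma>" using w(6) by (simp add: inner_commute)
    then show ?thesis using abs_inner_le1[OF upw x] abs_inner_le1[OF upw upu]
      by (intro abs_prod_le) (auto simp: mult_left_mono)
  qed simp
  have "x \<bullet> (T *v perp u1) = exp (real m*\<alpha>) * (w \<bullet> x) * (w \<bullet> perp u1) + exp (real m*\<beta>) * (perp w \<bullet> x) * (perp w \<bullet> perp u1)"
    using w(2) mk_bil by simp
  then show "\<bar>x \<bullet> (T *v perp u1)\<bar> \<le> 2 * exp (real m * \<sigma>)" using b1 b2 by linarith
qed

end



lemma asym_real:
  fixes e1 es r n c a b d LA LB xx yy :: real
  assumes e1: "e1 > 0" and es: "es = e1 * r" and r0: "r \<ge> 0" and n1: "n \<ge> 1" and c0: "c > 0"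
    and rc: "r \<le> c / (8 * n^2)" and rn: "r \<le> 1 / (4 * n)"
    and a1: "e1 \<le> a" and a2: "a \<le> n * e1" and bb: "\<bar>b\<bar> \<le> n * (2 * es)"
    and d1: "c * es \<le> d" and d2: "d \<le> n * (2 * es)"
    and F1a: "a \<le> LA" and F1b: "LB \<le> d" and F2: "LA \<le> a + 2 * \<bar>b\<bar> + d"
    and F3: "LA * LB = a * d - b^2" and F4: "yy * (LA - d) = xx * b" and xx: "\<bar>xx\<bar> \<le> 1"
  shows "e1 \<le> LA" "LA \<le> 7 * n * e1" "c * es / (14 * n) \<le> LB" "LB \<le> 2 * n * es" "\<bar>yy\<bar> \<le> 4 * n * r"
proof -
  have r1: "r \<le> 1" using rn n1 by (smt (verit) divide_le_eq_1_pos)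
  have es0: "es \<ge> 0" using es e1 r0 by simp
  have esle: "es \<le> e1" using es e1 r1 by (simp add: mult_left_le)
  show "e1 \<le> LA" using a1 F1a by linarith
  have "LA \<le> n * e1 + 6 * n * es" using F2 a2 bb d2 by linarith
  also have "\<dots> \<le> 7 * n * e1"
  proof -
    have "n * es \<le> n * e1" using esle n1 by (intro mult_left_mono) auto
    then show ?thesis by linarith
  qed
  finally show LA7: "LA \<le> 7 * n * e1" .
  show "LB \<le> 2 * n * es" using F1b d2 by linarith
  have LApos: "LA > 0" using e1 a1 F1a by linarith
  have ad: "e1 * (c * es) \<le> a * d" using a1 d1 e1 c0 es0 by (intro mult_mono) auto
  have "b^2 \<le> (n * (2 * es))^2" using bb by (metis abs_ge_zero power2_abs power_mono)
  also have "\<dots> = 4 * n^2 * es * (e1 * r)" using es by (simp add: power2_eq_square algebra_simps)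
  also have "\<dots> \<le> 4 * n^2 * es * (e1 * (c / (8 * n^2)))"
    using rc e1 es0 n1 by (intro mult_left_mono) (auto intro: mult_left_mono)
  also have "\<dots> = e1 * (c * es) / 2" using n1 by (simp add: field_simps power2_eq_square)
  finally have b2: "b^2 \<le> e1 * (c * es) / 2" .
  have prod: "e1 * (c * es) / 2 \<le> LA * LB" using F3 ad b2 by linarith
  have "c * es / (14 * n) = (e1 * (c * es) / 2) / (7 * n * e1)" using e1 n1 by (simp add: field_simps)
  also have "\<dots> \<le> (LA * LB) / (7 * n * e1)" using prod e1 n1 by (intro divide_right_mono) auto
  also have "\<dots> \<le> (LA * LB) / LA"
  proof (rule divide_left_mono)
    have "0 \<le> e1 * (c * es) / 2" using e1 c0 es0 by simp
    then show "0 \<le> LA * LB" using prod by linarith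
    show "LA \<le> 7 * n * e1" using LA7 .
    show "0 < 7 * n * e1 * LA" using LApos e1 n1 by simp
  qed
  also have "\<dots> = LB" using LApos by simp
  finally show "c * es / (14 * n) \<le> LB" .
  have "2 * n * es = 2 * n * r * e1" using es by simp
  also have "\<dots> \<le> 2 * n * (1 / (4 * n)) * e1" using rn n1 e1 by (intro mult_right_mono mult_left_mono) auto
  also have "\<dots> = e1 / 2" using n1 by simp
  finally have "2 * n * es \<le> e1 / 2" .
  then have gap: "LA - d \<ge> e1 / 2" using a1 F1a d2 by linarith
  have "\<bar>yy\<bar> * (LA - d) = \<bar>xx\<bar> * \<bar>b\<bar>" using F4 gap e1 by (metis abs_mult abs_of_nonneg half_gt_zero less_eq_real_def order_less_le_trans)
  also have "\<dots> \<le> \<bar>b\<bar>" using xx by (simp add: mult_left_le_one_le)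
  also have "\<dots> \<le> 2 * n * e1 * r" using bb es by (simp add: algebra_simps)
  finally have yb: "\<bar>yy\<bar> * (LA - d) \<le> 2 * n * e1 * r" .
  have "\<bar>yy\<bar> * (e1 / 2) \<le> \<bar>yy\<bar> * (LA - d)" using gap by (intro mult_left_mono) auto
  then have "\<bar>yy\<bar> * (e1 / 2) \<le> (4 * n * r) * (e1 / 2)" using yb by (simp add: algebra_simps)
  then show "\<bar>yy\<bar> \<le> 4 * n * r" using e1 by (simp add: mult_le_cancel_right)
qed


lemma mv_decomp: "unit2 u \<Longrightarrow> M *v v = (u \<bullet> v) *\<^sub>R (M *v u) + (perp u \<bullet> v) *\<^sub>R (M *v perp u)"
  apply (subst (1) decomp[of u v], assumption)
  by (simp add: matrix_vector_right_distrib matrix_vector_mult_scaleR)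

lemma quad_expand: assumes "sym2 M" "unit2 u"
  shows "v \<bullet> (M *v v) = (u \<bullet> v)^2 * (u \<bullet> (M *v u)) + 2 * (u \<bullet> v) * (perp u \<bullet> v) * (u \<bullet> (M *v perp u))
     + (perp u \<bullet> v)^2 * (perp u \<bullet> (M *v perp u))"
proof -
  have 1: "v \<bullet> (M *v v) = (u \<bullet> v) * (v \<bullet> (M *v u)) + (perp u \<bullet> v) * (v \<bullet> (M *v perp u))"
    using mv_decomp[OF assms(2), of M v] by (simp add: inner_add_right)
  have 2: "v \<bullet> (M *v u) = (u \<bullet> v) * (u \<bullet> (M *v u)) + (perp u \<bullet> v) * (u \<bullet> (M *v perp u))"
    using sym_swap[OF assms(1), of v u] mv_decomp[OF assms(2), of M v] by (simp add: inner_add_right)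
  have 3: "v \<bullet> (M *v perp u) = (u \<bullet> v) * (u \<bullet> (M *v perp u)) + (perp u \<bullet> v) * (perp u \<bullet> (M *v perp u))"
    using sym_swap[OF assms(1), of v "perp u"] sym_swap[OF assms(1), of "perp u" u] mv_decomp[OF assms(2), of M v]
    by (simp add: inner_add_right)
  show ?thesis unfolding 1 2 3 by (simp add: power2_eq_square algebra_simps)
qed

lemma perp_mv: assumes "sym2 M" "unit2 u"
  shows "perp u \<bullet> (M *v v) = (u \<bullet> v) * (u \<bullet> (M *v perp u)) + (perp u \<bullet> v) * (perp u \<bullet> (M *v perp u))"
  using sym_swap[OF assms(1), of "perp u" u] mv_decomp[OF assms(2), of M v] by (simp add: inner_add_right)

lemma log_sandwich:
  assumes ev: "eventually (\<lambda>m. K1 * exp (real m * L) \<le> f m \<and> f m \<le> K2 * exp (real m * L)) sequentially"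
    and K1: "K1 > 0"
  shows "(\<lambda>m. ln (f m) / real m) \<longlonglongrightarrow> L"
proof (rule tendsto_sandwich[of "\<lambda>m. L + ln K1 / real m" _ _ "\<lambda>m. L + ln K2 / real m"])
  have ev2: "eventually (\<lambda>m. (K1 * exp (real m * L) \<le> f m \<and> f m \<le> K2 * exp (real m * L)) \<and> m \<ge> 1) sequentially"
    using ev eventually_ge_at_top by (rule eventually_conj)
  show "eventually (\<lambda>m. L + ln K1 / real m \<le> ln (f m) / real m) sequentially"
  proof (rule eventually_mono[OF ev2])
    fix m :: nat assume h: "(K1 * exp (real m * L) \<le> f m \<and> f m \<le> K2 * exp (real m * L)) \<and> m \<ge> 1"
    have p: "K1 * exp (real m * L) > 0" using K1 by simp
    have "ln (K1 * exp (real m * L)) \<le> ln (f m)" using h p by (intro ln_mono) auto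
    then have "ln K1 + real m * L \<le> ln (f m)" using K1 by (simp add: ln_mult)
    then have "(ln K1 + real m * L) / real m \<le> ln (f m) / real m" by (rule divide_right_mono) simp
    moreover have "L + ln K1 / real m = (ln K1 + real m * L) / real m" using h by (simp add: field_simps)
    ultimately show "L + ln K1 / real m \<le> ln (f m) / real m" by simp
  qed
  show "eventually (\<lambda>m. ln (f m) / real m \<le> L + ln K2 / real m) sequentially"
  proof (rule eventually_mono[OF ev2])
    fix m :: nat assume h: "(K1 * exp (real m * L) \<le> f m \<and> f m \<le> K2 * exp (real m * L)) \<and> m \<ge> 1"
    have p: "K1 * exp (real m * L) > 0" using K1 by simp
    have fp: "f m > 0" using h p by linarith
    have K2: "K2 > 0" using h fp by (smt (verit) exp_gt_zero mult_nonpos_nonneg)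
    have "ln (f m) \<le> ln (K2 * exp (real m * L))" using h fp by (intro ln_mono) auto
    then have "ln (f m) \<le> ln K2 + real m * L" using K2 by (simp add: ln_mult)
    then have "ln (f m) / real m \<le> (ln K2 + real m * L) / real m" by (rule divide_right_mono) simp
    moreover have "L + ln K2 / real m = (ln K2 + real m * L) / real m" using h by (simp add: field_simps)
    ultimately show "ln (f m) / real m \<le> L + ln K2 / real m" by simp
  qed
  show "(\<lambda>m. L + ln K1 / real m) \<longlonglongrightarrow> L" using tendsto_add[OF tendsto_const lim_const_over_n, of L "ln K1"] by simp
  show "(\<lambda>m. L + ln K2 / real m) \<longlonglongrightarrow> L" using tendsto_add[OF tendsto_const lim_const_over_n, of L "ln K2"] by simp
qed




context ctx begin

lemma Sup_LE_eq: "Sup_LE XX = S"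
proof -
  define M where "M m = (\<Sum>A\<in>#XX. matfun exp (real m *\<^sub>R A))" for m :: nat
  define n where "n = real (size XX)"
  have "XX \<noteq> {#}" using A1 by auto
  then have "size XX \<ge> 1" by (simp add: Suc_le_eq nonempty_has_size)
  then have n1: "n \<ge> 1" unfolding n_def by simp
  have upu: "unit2 (perp u1)" using u1 by (simp add: unit_perp)
  have symM: "sym2 (M m)" for m unfolding M_def by (rule sum_mset_sym) (rule term_bounds(5)[OF _ u1])
  define a where "a m = u1 \<bullet> (M m *v u1)" for m
  define b where "b m = u1 \<bullet> (M m *v perp u1)" for m
  define d where "d m = perp u1 \<bullet> (M m *v perp u1)" for m
  have a_lo: "exp (real m * l1) \<le> a m" for m
  proof -
    have "u1 \<bullet> (matfun exp (real m *\<^sub>R mk u1 l1 \<mu>1) *v u1) = exp (real m * l1)"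
      by (simp add: mk_scale matfun_mk[OF u1] mk_u[OF u1] inner_uu[OF u1])
    moreover have "u1 \<bullet> (matfun exp (real m *\<^sub>R mk u1 l1 \<mu>1) *v u1) \<le> a m"
      unfolding a_def M_def sum_mset_mv_inner
      by (rule sum_mset_ge_member[OF _ A1]) (rule term_bounds(1)[OF _ u1])
    ultimately show ?thesis by simp
  qed
  have a_hi: "a m \<le> n * exp (real m * l1)" for m
  proof -
    have "\<bar>a m\<bar> \<le> n * exp (real m * l1)" unfolding a_def M_def sum_mset_mv_inner n_def
      by (rule sum_mset_abs_bound) (use term_bounds(1,2)[OF _ u1] in fastforce)
    then show ?thesis by simp
  qed
  have b_hi: "\<bar>b m\<bar> \<le> n * (2 * exp (real m * \<sigma>))" for m
    unfolding b_def M_def sum_mset_mv_inner n_def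
    by (rule sum_mset_abs_bound) (rule term_bounds(3)[OF _ u1])
  have d_hi: "d m \<le> n * (2 * exp (real m * \<sigma>))" for m
  proof -
    have "\<bar>d m\<bar> \<le> n * (2 * exp (real m * \<sigma>))" unfolding d_def M_def sum_mset_mv_inner n_def
      by (rule sum_mset_abs_bound) (rule term_bounds(3)[OF _ upu])
    then show ?thesis by simp
  qed
  obtain Aw z where Az: "Aw \<in># XX" "unit2 z" "Aw *v z = \<sigma> *\<^sub>R z" "perp u1 \<bullet> z \<noteq> 0" using wit by blast
  obtain \<beta> where Aeq: "Aw = mk z \<sigma> \<beta>" using frame[OF _ Az(2,3)] symm Az(1) by blast
  define c where "c = (z \<bullet> perp u1)^2"
  have c0: "c > 0" using Az(4) by (simp add: c_def inner_commute)
  have d_lo: "c * exp (real m * \<sigma>) \<le> d m" for m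
  proof -
    have "c * exp (real m * \<sigma>) \<le> perp u1 \<bullet> (matfun exp (real m *\<^sub>R Aw) *v perp u1)"
      unfolding Aeq by (simp add: mk_scale matfun_mk[OF Az(2)] mk_quad c_def inner_commute)
    also have "\<dots> \<le> d m"
      unfolding d_def M_def sum_mset_mv_inner
      by (rule sum_mset_ge_member[OF _ Az(1)]) (rule term_bounds(4)[OF _ u1])
    finally show ?thesis .
  qed
  have "\<forall>m. \<exists>t. unit2 (fst t) \<and> snd (snd t) \<le> fst (snd t) \<and> M m = mk (fst t) (fst (snd t)) (snd (snd t))"
  proof
    fix m
    obtain w l l' where "unit2 w" "l' \<le> l" "M m = mk w l l'" using spectral[OF symM] by blast
    then show "\<exists>t. unit2 (fst t) \<and> snd (snd t) \<le> fst (snd t) \<and> M m = mk (fst t) (fst (snd t)) (snd (snd t))"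
      by (intro exI[of _ "(w,l,l')"]) simp
  qed
  from choice[OF this] obtain F where F: "\<And>m. unit2 (fst (F m)) \<and> snd (snd (F m)) \<le> fst (snd (F m)) \<and> M m = mk (fst (F m)) (fst (snd (F m))) (snd (snd (F m)))"
    by blast
  define V where "V m = fst (F m)" for m
  define LA where "LA m = fst (snd (F m))" for m
  define LB where "LB m = snd (snd (F m))" for m
  have V: "unit2 (V m)" "LB m \<le> LA m" "M m = mk (V m) (LA m) (LB m)" for m
    using F[of m] unfolding V_def LA_def LB_def by auto
  have SupEq: "Sup_LE XX = lim (\<lambda>m. mk (V m) (ln (LA m) / real m) (ln (LB m) / real m))"
    unfolding Sup_LE_def M_def[symmetric] V(3) by (simp add: matfun_mk[OF V(1)] mk_scale)
  define xx where "xx m = u1 \<bullet> V m" for m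
  define yy where "yy m = perp u1 \<bullet> V m" for m
  have Vd: "V m = xx m *\<^sub>R u1 + yy m *\<^sub>R perp u1" for m
    unfolding xx_def yy_def by (rule decomp[OF u1])
  have xy1: "(xx m)^2 + (yy m)^2 = 1" for m
    unfolding xx_def yy_def using pyth[OF u1, of "V m"] V(1) by (simp add: unit_inner)
  have xle: "\<bar>xx m\<bar> \<le> 1" for m unfolding xx_def by (rule abs_inner_le1[OF u1 V(1)])
  have yle: "\<bar>yy m\<bar> \<le> 1" for m unfolding yy_def by (rule abs_inner_le1[OF upu V(1)])
  have F1a: "a m \<le> LA m" for m
    using mk_quad_unit[OF u1 V(1), of "LA m" "LB m"] V(2,3)[of m] unfolding a_def by simp
  have F1b: "LB m \<le> d m" for m
    using mk_quad_unit[OF upu V(1), of "LA m" "LB m"] V(2,3)[of m] unfolding d_def by simp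
  have LAq: "LA m = V m \<bullet> (M m *v V m)" for m
    using V(3)[of m] mk_u[OF V(1)] inner_uu[OF V(1)] by simp
  have F2: "LA m \<le> a m + 2 * \<bar>b m\<bar> + d m" for m
  proof -
    have e: "LA m = (xx m)^2 * a m + 2 * xx m * yy m * b m + (yy m)^2 * d m"
      using LAq[of m] quad_expand[OF symM[of m] u1, of "V m"] unfolding a_def b_def d_def xx_def yy_def by linarith
    have a0: "a m \<ge> 0" using a_lo[of m] by (smt (verit) exp_gt_zero)
    have d0: "d m \<ge> 0" using d_lo[of m] c0 by (smt (verit) exp_gt_zero mult_pos_pos)
    have "(xx m)^2 * a m \<le> a m" using xy1[of m] a0 by (smt (verit) mult_left_le_one_le zero_le_power2)
    moreover have "(yy m)^2 * d m \<le> d m" using xy1[of m] d0 by (smt (verit) mult_left_le_one_le zero_le_power2)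
    moreover have "2 * xx m * yy m * b m \<le> 2 * \<bar>b m\<bar>"
    proof -
      have "\<bar>xx m * yy m\<bar> \<le> 1" using xle[of m] yle[of m] by (simp add: abs_mult mult_le_one)
      then have "\<bar>xx m * yy m * b m\<bar> \<le> \<bar>b m\<bar>" by (simp add: abs_mult mult_left_le_one_le)
      then have "xx m * yy m * b m \<le> \<bar>b m\<bar>" by (rule abs_le_D1)
      then show ?thesis by (simp only: mult.assoc)
    qed
    ultimately show ?thesis using e by linarith
  qed
  have F3: "LA m * LB m = a m * d m - (b m)^2" for m
  proof -
    have "a m * d m - (b m)^2 = M m $1$1 * M m $2$2 - M m $1$2 * M m $1$2"
      unfolding a_def b_def d_def by (rule det_frame[OF symM u1])
    also have "\<dots> = (V m \<bullet> (M m *v V m)) * (perp (V m) \<bullet> (M m *v perp (V m))) - (V m \<bullet> (M m *v perp (V m)))^2"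
      by (rule det_frame[OF symM V(1), symmetric])
    also have "\<dots> = LA m * LB m"
      using V(3)[of m] mk_u[OF V(1)] mk_pu[OF V(1)] inner_uu[OF V(1)] inner_u_perp by simp
    finally show ?thesis by simp
  qed
  have F4: "yy m * (LA m - d m) = xx m * b m" for m
  proof -
    have "perp u1 \<bullet> (M m *v V m) = LA m * yy m"
      using V(3)[of m] mk_u[OF V(1)] unfolding yy_def by simp
    moreover have "perp u1 \<bullet> (M m *v V m) = xx m * b m + yy m * d m"
      using perp_mv[OF symM[of m] u1, of "V m"] unfolding xx_def yy_def b_def d_def by linarith
    ultimately show ?thesis by (simp add: algebra_simps)
  qed
  define r where "r m = exp (real m * (\<sigma> - l1))" for m :: nat
  have es_eq: "exp (real m * \<sigma>) = exp (real m * l1) * r m" for m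
    unfolding r_def by (simp add: exp_add[symmetric] algebra_simps)
  have r0: "r m \<ge> 0" for m unfolding r_def by simp
  have rlim: "r \<longlonglongrightarrow> 0"
  proof -
    have "r = (\<lambda>m. exp (\<sigma> - l1) ^ m)" unfolding r_def by (simp add: exp_of_nat_mult[symmetric])
    moreover have "(\<lambda>m. exp (\<sigma> - l1) ^ m) \<longlonglongrightarrow> 0" using sl by (intro LIMSEQ_power_zero) simp
    ultimately show ?thesis by simp
  qed
  define \<rho> where "\<rho> = min (c / (8 * n^2)) (1 / (4 * n))"
  have \<rho>0: "\<rho> > 0" unfolding \<rho>_def using c0 n1 by simp
  have ev: "eventually (\<lambda>m. r m < \<rho>) sequentially" using rlim \<rho>0 by (rule order_tendstoD)
  have bnds: "exp (real m * l1) \<le> LA m \<and> LA m \<le> 7 * n * exp (real m * l1) \<and>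
      c * exp (real m * \<sigma>) / (14 * n) \<le> LB m \<and> LB m \<le> 2 * n * exp (real m * \<sigma>) \<and> \<bar>yy m\<bar> \<le> 4 * n * r m"
    if rm: "r m < \<rho>" for m
  proof -
    have rc: "r m \<le> c / (8 * n^2)" "r m \<le> 1 / (4 * n)" using rm unfolding \<rho>_def by auto
    note A = asym_real[OF exp_gt_zero es_eq r0 n1 c0 rc a_lo a_hi b_hi d_lo d_hi F1a F1b F2 F3 F4 xle]
    show ?thesis using A by blast
  qed
  have evb: "eventually (\<lambda>m. exp (real m * l1) \<le> LA m \<and> LA m \<le> 7 * n * exp (real m * l1) \<and>
      c * exp (real m * \<sigma>) / (14 * n) \<le> LB m \<and> LB m \<le> 2 * n * exp (real m * \<sigma>) \<and> \<bar>yy m\<bar> \<le> 4 * n * r m) sequentially"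
    using ev by (rule eventually_mono) (rule bnds)
  have P: "(\<lambda>m. ln (LA m) / real m) \<longlonglongrightarrow> l1"
    by (rule log_sandwich[of 1 _ _ "7 * n"]) (use evb in \<open>eventually_elim, auto\<close>)
  have Q: "(\<lambda>m. ln (LB m) / real m) \<longlonglongrightarrow> \<sigma>"
  proof (rule log_sandwich[of "c / (14 * n)" _ _ "2 * n"])
    show "c / (14 * n) > 0" using c0 n1 by simp
    show "eventually (\<lambda>m. c / (14 * n) * exp (real m * \<sigma>) \<le> LB m \<and> LB m \<le> 2 * n * exp (real m * \<sigma>)) sequentially"
      using evb by eventually_elim auto
  qed
  have hy0: "yy \<longlonglongrightarrow> 0"
  proof (rule Lim_null_comparison)
    show "eventually (\<lambda>m. norm (yy m) \<le> 4 * n * r m) sequentially"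
      using evb by eventually_elim auto
    show "(\<lambda>m. 4 * n * r m) \<longlonglongrightarrow> 0" using tendsto_mult[OF tendsto_const rlim, of "4 * n"] by simp
  qed
  have hy: "(\<lambda>m. (yy m)^2) \<longlonglongrightarrow> 0" using tendsto_power[OF hy0, of 2] by simp
  have hxy: "(\<lambda>m. xx m * yy m) \<longlonglongrightarrow> 0"
  proof (rule Lim_null_comparison)
    show "eventually (\<lambda>m. norm (xx m * yy m) \<le> \<bar>yy m\<bar>) sequentially"
      using xle by (intro always_eventually) (simp add: abs_mult mult_left_le_one_le)
    show "(\<lambda>m. \<bar>yy m\<bar>) \<longlonglongrightarrow> 0" using tendsto_rabs_zero[OF hy0] .
  qed
  have hx: "(\<lambda>m. (xx m)^2) \<longlonglongrightarrow> 1"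
  proof -
    have "(\<lambda>m. 1 - (yy m)^2) \<longlonglongrightarrow> 1 - 0" by (intro tendsto_intros hy)
    moreover have "(\<lambda>m. 1 - (yy m)^2) = (\<lambda>m. (xx m)^2)" using xy1 by (auto simp: algebra_simps)
    ultimately show ?thesis by simp
  qed
  have "(\<lambda>m. mk (V m) (ln (LA m) / real m) (ln (LB m) / real m)) \<longlonglongrightarrow> mk u1 l1 \<sigma>"
    by (rule mk_lim[OF Vd hx hxy hy P Q])
  then show ?thesis unfolding SupEq S_def by (rule limI)
qed

end



context ctx begin
lemma Sup_LE_mk: "Sup_LE XX = mk u1 l1 \<sigma>" using Sup_LE_eq S_def by simp
lemma S_in_mk: "(\<And>A z \<nu>. A \<in># XX \<Longrightarrow> unit2 z \<Longrightarrow> A *v z = \<nu> *\<^sub>R z \<Longrightarrow> 0 \<le> \<nu>) \<Longrightarrow> mk u1 l1 \<sigma> \<in> UB_star0 XX"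
  using S_in S_def by simp
lemma S_min_mk: "(\<And>A z \<nu>. A \<in># XX \<Longrightarrow> unit2 z \<Longrightarrow> A *v z = \<nu> *\<^sub>R z \<Longrightarrow> 0 \<le> \<nu>) \<Longrightarrow> Y \<in> UB_star0 XX \<Longrightarrow>
   lexle (phi (mk u1 l1 \<sigma>)) (phi Y) \<and> (lexle (phi Y) (phi (mk u1 l1 \<sigma>)) \<longrightarrow> Y = mk u1 l1 \<sigma>)"
  using S_min S_def by simp
end

lemma in_sum_mset_image: "x \<in># (\<Sum>A\<in>#XX. f A) \<Longrightarrow> \<exists>A\<in>#XX. x \<in># f A"
  by (induction XX) auto

lemma eigs_add: "eigs (add_mset A XX) = {#lmax A, lmin A#} + eigs XX"
  by (simp add: eigs_def)

lemma eigs_mem: "A \<in># XX \<Longrightarrow> lmax A \<in># eigs XX \<and> lmin A \<in># eigs XX"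
proof -
  assume "A \<in># XX"
  then obtain XX' where "XX = add_mset A XX'" by (metis multi_member_split)
  then show ?thesis by (simp add: eigs_add)
qed

lemma eigval_in: assumes "sym2 A" "unit2 z" "A *v z = \<nu> *\<^sub>R z" shows "\<nu> = lmax A \<or> \<nu> = lmin A"
proof -
  obtain w a b where w: "unit2 w" "b \<le> a" "A = mk w a b" using spectral[OF assms(1)] by blast
  have "\<nu> \<in> eigenvalues2 A" using assms(2,3) unit_nz[OF assms(2)] by (auto simp: eigenvalues2_def)
  then show ?thesis using w by (auto simp: eig_mk lmax_mk lmin_mk max_def min_def)
qed

lemma eig_in_eigs: "\<forall>A\<in>#XX. sym2 A \<Longrightarrow> A \<in># XX \<Longrightarrow> unit2 z \<Longrightarrow> A *v z = \<nu> *\<^sub>R z \<Longrightarrow> \<nu> \<in># eigs XX"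
  using eigval_in eigs_mem by metis

lemma mkctx:
  assumes sym: "\<forall>A\<in>#XX. sym2 A" and cnt: "count (eigs XX) l1 = 1" and mx: "\<forall>l\<in>#eigs XX. l \<le> l1"
  shows "\<exists>u1 \<sigma> \<mu>1. ctx XX u1 l1 \<sigma> \<mu>1"
proof -
  have "l1 \<in># eigs XX" using cnt by (simp add: count_greater_zero_iff[symmetric])
  then have "l1 \<in># (\<Sum>A\<in>#XX. {#lmax A, lmin A#})" unfolding eigs_def .
  from in_sum_mset_image[OF this] obtain A1 where A1: "A1 \<in># XX" "l1 \<in># {#lmax A1, lmin A1#}" by blast
  obtain XX' where XX: "XX = add_mset A1 XX'" using A1(1) by (metis multi_member_split)
  obtain u1 a b where u: "unit2 u1" "b \<le> a" "A1 = mk u1 a b" using spectral sym A1(1) by blast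
  have lm: "lmax A1 = a" "lmin A1 = b" using u by (simp_all add: lmax_mk lmin_mk)
  have "a \<le> l1" using mx eigs_mem[OF A1(1)] lm by auto
  then have al: "a = l1" using A1(2) lm u(2) by auto
  have c2: "count (eigs XX) l1 = count {#a, b#} l1 + count (eigs XX') l1" using XX lm by (simp add: eigs_add)
  have bl: "b \<noteq> l1" using c2 cnt al by auto
  then have bl': "b < l1" using u(2) al by simp
  have c0: "count (eigs XX') l1 = 0" using c2 cnt al bl by auto
  have upu: "unit2 (perp u1)" using u(1) by (simp add: unit_perp)
  have symXX': "\<forall>A\<in>#XX'. sym2 A" using sym XX by simp
  have key: "\<nu> \<le> l1 \<and> (perp u1 \<bullet> z \<noteq> 0 \<longrightarrow> \<nu> < l1)" if A: "A \<in># XX" "unit2 z" "A *v z = \<nu> *\<^sub>R z" for A z \<nu>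
  proof -
    have "\<nu> \<in># eigs XX" using eig_in_eigs[OF sym A] .
    then have le: "\<nu> \<le> l1" using mx by auto
    show ?thesis
    proof (cases "A = A1")
      case True
      have "b * (perp u1 \<bullet> z) = \<nu> * (perp u1 \<bullet> z)" using mk_inner(2)[OF u(1), of a b z] A(3) True u(3) by auto
      then have "perp u1 \<bullet> z \<noteq> 0 \<longrightarrow> \<nu> = b" by auto
      then show ?thesis using le bl' by auto
    next
      case False
      then have "A \<in># XX'" using A(1) XX by auto
      then have "\<nu> \<in># eigs XX'" using eig_in_eigs[OF symXX' _ A(2,3)] by blast
      then have "\<nu> \<noteq> l1" using c0 by (metis count_eq_zero_iff)
      then show ?thesis using le by auto
    qed
  qed
  define \<Sigma> where "\<Sigma> = {\<nu>. \<exists>A\<in>#XX. \<exists>z. unit2 z \<and> A *v z = \<nu> *\<^sub>R z \<and> perp u1 \<bullet> z \<noteq> 0}"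
  have fin: "finite \<Sigma>"
  proof (rule finite_subset)
    show "\<Sigma> \<subseteq> set_mset (eigs XX)" unfolding \<Sigma>_def using eig_in_eigs[OF sym] by blast
  qed simp
  have bS: "b \<in> \<Sigma>" unfolding \<Sigma>_def using A1(1) u upu mk_pu[OF u(1), of a b] inner_uu(2)[OF u(1)]
    by (intro CollectI bexI[of _ A1] exI[of _ "perp u1"]) auto
  define \<sigma> where "\<sigma> = Max \<Sigma>"
  have sS: "\<sigma> \<in> \<Sigma>" unfolding \<sigma>_def using fin bS by (intro Max_in) auto
  have geS: "\<nu> \<le> \<sigma>" if "\<nu> \<in> \<Sigma>" for \<nu> unfolding \<sigma>_def using fin that by simp
  have "ctx XX u1 l1 \<sigma> b"
  proof
    show "\<forall>A\<in>#XX. sym2 A" by (rule sym)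
    show "unit2 u1" by (rule u(1))
    show "mk u1 l1 b \<in># XX" using A1(1) u(3) al by simp
    show "b \<le> \<sigma>" using geS bS .
    show "\<nu> \<le> l1 \<and> (perp u1 \<bullet> z \<noteq> 0 \<longrightarrow> \<nu> \<le> \<sigma>)" if "A \<in># XX" "unit2 z" "A *v z = \<nu> *\<^sub>R z" for A z \<nu>
      using key[OF that] geS[of \<nu>] that unfolding \<Sigma>_def by blast
    show "\<exists>A\<in>#XX. \<exists>z. unit2 z \<and> A *v z = \<sigma> *\<^sub>R z \<and> perp u1 \<bullet> z \<noteq> 0" using sS unfolding \<Sigma>_def by blast
    show "\<sigma> < l1" using sS key unfolding \<Sigma>_def by blast
  qed
  then show ?thesis by blast
qed

lemma mv_shift: "((A::mat2) + c *\<^sub>R mat 1) *v z = A *v z + c *\<^sub>R z"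
  by (simp add: vec2_eq algebra_simps)

lemma shift_ctx: assumes "ctx XX u1 l1 \<sigma> \<mu>1"
  shows "ctx (image_mset (\<lambda>A. A + c *\<^sub>R mat 1) XX) u1 (l1 + c) (\<sigma> + c) (\<mu>1 + c)"
proof -
  interpret ctx XX u1 l1 \<sigma> \<mu>1 by (rule assms)
  have mk1: "mk u1 l1 \<mu>1 + c *\<^sub>R mat 1 = mk u1 (l1 + c) (\<mu>1 + c)"
    by (simp add: mk_one[OF u1] mk_scale mk_add)
  show ?thesis
  proof
    show "\<forall>A\<in>#image_mset (\<lambda>A. A + c *\<^sub>R mat 1) XX. sym2 A" using symm by (auto simp: sym2_c)
    show "unit2 u1" by (rule u1)
    show "mk u1 (l1 + c) (\<mu>1 + c) \<in># image_mset (\<lambda>A. A + c *\<^sub>R mat 1) XX"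
      unfolding mk1[symmetric] using A1 by simp
    show "\<mu>1 + c \<le> \<sigma> + c" using mu1 by simp
    show "\<sigma> + c < l1 + c" using sl by simp
    fix A z \<nu> assume h: "A \<in># image_mset (\<lambda>A. A + c *\<^sub>R mat 1) XX" "unit2 z" "A *v z = \<nu> *\<^sub>R z"
    then obtain B where B: "B \<in># XX" "A = B + c *\<^sub>R mat 1" by auto
    have "B *v z + c *\<^sub>R z = \<nu> *\<^sub>R z" using h(3) B(2) mv_shift[of B c z] by simp
    then have "B *v z = \<nu> *\<^sub>R z - c *\<^sub>R z" by (simp add: eq_diff_eq)
    then have "B *v z = (\<nu> - c) *\<^sub>R z" by (simp add: scaleR_diff_left)
    from bound[OF B(1) h(2) this] show "\<nu> \<le> l1 + c \<and> (perp u1 \<bullet> z \<noteq> 0 \<longrightarrow> \<nu> \<le> \<sigma> + c)" by auto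
  next
    obtain B z where Bz: "B \<in># XX" "unit2 z" "B *v z = \<sigma> *\<^sub>R z" "perp u1 \<bullet> z \<noteq> 0" using wit by blast
    show "\<exists>A\<in>#image_mset (\<lambda>A. A + c *\<^sub>R mat 1) XX. \<exists>z. unit2 z \<and> A *v z = (\<sigma> + c) *\<^sub>R z \<and> perp u1 \<bullet> z \<noteq> 0"
    proof (intro bexI[of _ "B + c *\<^sub>R mat 1"] exI[of _ z] conjI)
      show "(B + c *\<^sub>R mat 1) *v z = (\<sigma> + c) *\<^sub>R z" using Bz(3) by (simp add: mv_shift scaleR_add_left)
    qed (use Bz in simp_all)
  qed
qed




lemma phi_shift: assumes "sym2 Y" shows "phi (Y - c *\<^sub>R mat 1) = (lmax Y - c, lmin Y - c)"
proof -
  obtain w a b where w: "unit2 w" "b \<le> a" "Y = mk w a b" using spectral[OF assms] by blast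
  have "Y - c *\<^sub>R mat 1 = mk w (a - c) (b - c)" using w by (simp add: mk_one[OF w(1)] mk_scale mk_diff)
  then show ?thesis using w by (simp add: phi_def lmax_mk lmin_mk)
qed

lemma UB_star0_psd: "Y \<in> UB_star0 XX \<Longrightarrow> psd2 Y"
proof -
  assume "Y \<in> UB_star0 XX"
  then have "Y \<in> UB_p 1 XX" by (auto simp: UB_star0_def)
  then show "psd2 Y" by (simp add: UB_p_def)
qed

theorem theorem4:
  fixes XX :: "mat2 multiset"
  assumes sym: "\<forall>A\<in>#XX. sym2 A"
    and hyp: "lemma7_hyp XX"
  shows "(\<forall>A\<in>UB XX. \<forall>B\<in>UB XX. loewner_le B A \<longrightarrow> lexle (phi B) (phi A))
       \<and> (\<forall>Y1\<in>UB XX. \<forall>Y2\<in>UB XX. \<forall>\<alpha>::real. 0 \<le> \<alpha> \<and> \<alpha> \<le> 1 \<longrightarrow>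
            lexle (0, 0) (\<alpha> *\<^sub>R phi Y1 + (1 - \<alpha>) *\<^sub>R phi Y2 - phi (\<alpha> *\<^sub>R Y1 + (1 - \<alpha>) *\<^sub>R Y2)))
       \<and> (Sup_LE XX \<in> UB_star XX
          \<and> (\<forall>Y\<in>UB_star XX. lexle (phi (Sup_LE XX)) (phi Y))
          \<and> (\<forall>Y\<in>UB_star XX. lexle (phi Y) (phi (Sup_LE XX)) \<longrightarrow> Y = Sup_LE XX))"
proof (intro conjI)
  show "\<forall>A\<in>UB XX. \<forall>B\<in>UB XX. loewner_le B A \<longrightarrow> lexle (phi B) (phi A)"
    by (auto simp: UB_def intro: part1)
  show "\<forall>Y1\<in>UB XX. \<forall>Y2\<in>UB XX. \<forall>\<alpha>::real. 0 \<le> \<alpha> \<and> \<alpha> \<le> 1 \<longrightarrow>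
            lexle (0, 0) (\<alpha> *\<^sub>R phi Y1 + (1 - \<alpha>) *\<^sub>R phi Y2 - phi (\<alpha> *\<^sub>R Y1 + (1 - \<alpha>) *\<^sub>R Y2))"
    by (auto simp: UB_def intro: part2)
  obtain l1 where l1: "count (eigs XX) l1 = 1" "\<forall>l\<in>#eigs XX. l \<le> l1"
    using hyp unfolding lemma7_hyp_def by blast
  obtain u1 \<sigma> \<mu>1 where C: "ctx XX u1 l1 \<sigma> \<mu>1" using mkctx[OF sym l1] by blast
  have SL: "Sup_LE XX = mk u1 l1 \<sigma>" by (rule ctx.Sup_LE_mk[OF C])
  have main: "Sup_LE XX \<in> UB_star XX \<and> (\<forall>Y\<in>UB_star XX. lexle (phi (Sup_LE XX)) (phi Y))
          \<and> (\<forall>Y\<in>UB_star XX. lexle (phi Y) (phi (Sup_LE XX)) \<longrightarrow> Y = Sup_LE XX)"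
  proof (cases "\<forall>l\<in>#eigs XX. 0 \<le> l")
    case True
    have U: "UB_star XX = UB_star0 XX" using True by (simp add: UB_star_def)
    have NN: "0 \<le> \<nu>" if "A \<in># XX" "unit2 z" "A *v z = \<nu> *\<^sub>R z" for A z \<nu>
      using eig_in_eigs[OF sym that] True by blast
    have i: "mk u1 l1 \<sigma> \<in> UB_star0 XX" by (rule ctx.S_in_mk[OF C]) (rule NN; assumption)
    have m: "lexle (phi (mk u1 l1 \<sigma>)) (phi Y) \<and> (lexle (phi Y) (phi (mk u1 l1 \<sigma>)) \<longrightarrow> Y = mk u1 l1 \<sigma>)"
      if "Y \<in> UB_star0 XX" for Y by (rule ctx.S_min_mk[OF C _ that]) (rule NN; assumption)
    show ?thesis unfolding U SL using i m by blast
  next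
    case False
    define c where "c = - Min (set_mset (eigs XX))"
    define XXc where "XXc = image_mset (\<lambda>A. A + c *\<^sub>R mat 1) XX"
    have U: "UB_star XX = (\<lambda>Y. Y - c *\<^sub>R mat 1) ` UB_star0 XXc"
      unfolding UB_star_def if_not_P[OF False] Let_def c_def XXc_def ..
    have C': "ctx XXc u1 (l1 + c) (\<sigma> + c) (\<mu>1 + c)" unfolding XXc_def by (rule shift_ctx[OF C])
    have NN: "0 \<le> \<nu>" if h: "A \<in># XXc" "unit2 z" "A *v z = \<nu> *\<^sub>R z" for A z \<nu>
    proof -
      obtain B where B: "B \<in># XX" "A = B + c *\<^sub>R mat 1" using h(1) unfolding XXc_def by auto
      have "B *v z + c *\<^sub>R z = \<nu> *\<^sub>R z" using h(3) B(2) mv_shift[of B c z] by simp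
      then have "B *v z = \<nu> *\<^sub>R z - c *\<^sub>R z" by (simp add: eq_diff_eq)
      then have "B *v z = (\<nu> - c) *\<^sub>R z" by (simp add: scaleR_diff_left)
      then have "\<nu> - c \<in># eigs XX" using eig_in_eigs[OF sym B(1) h(2)] by blast
      then have "Min (set_mset (eigs XX)) \<le> \<nu> - c" by simp
      then show ?thesis unfolding c_def by simp
    qed
    have Sc: "mk u1 (l1 + c) (\<sigma> + c) - c *\<^sub>R mat 1 = mk u1 l1 \<sigma>"
      using ctx.u1[OF C] by (simp add: mk_one mk_scale mk_diff)
    have in0: "mk u1 (l1 + c) (\<sigma> + c) \<in> UB_star0 XXc" by (rule ctx.S_in_mk[OF C']) (rule NN; assumption)
    have inU: "Sup_LE XX \<in> UB_star XX" unfolding U SL Sc[symmetric] using in0 by blast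
    have mins: "lexle (phi (Sup_LE XX)) (phi Y) \<and> (lexle (phi Y) (phi (Sup_LE XX)) \<longrightarrow> Y = Sup_LE XX)"
      if Y: "Y \<in> UB_star XX" for Y
    proof -
      obtain Y' where Y': "Y' \<in> UB_star0 XXc" "Y = Y' - c *\<^sub>R mat 1" using Y unfolding U by blast
      have sY': "sym2 Y'" using UB_star0_psd[OF Y'(1)] psd2_def by blast
      have sS: "sym2 (mk u1 (l1 + c) (\<sigma> + c))" by (rule mk_sym)
      have M: "lexle (phi (mk u1 (l1 + c) (\<sigma> + c))) (phi Y') \<and> (lexle (phi Y') (phi (mk u1 (l1 + c) (\<sigma> + c))) \<longrightarrow> Y' = mk u1 (l1 + c) (\<sigma> + c))"
        by (rule ctx.S_min_mk[OF C' _ Y'(1)]) (rule NN; assumption)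
      have pY: "phi Y = (lmax Y' - c, lmin Y' - c)" using phi_shift[OF sY'] Y'(2) by simp
      have pS: "phi (Sup_LE XX) = (lmax (mk u1 (l1 + c) (\<sigma> + c)) - c, lmin (mk u1 (l1 + c) (\<sigma> + c)) - c)"
        using phi_shift[OF sS, of c] SL Sc by simp
      have pY'': "phi Y' = (lmax Y', lmin Y')" "phi (mk u1 (l1 + c) (\<sigma> + c)) = (lmax (mk u1 (l1 + c) (\<sigma> + c)), lmin (mk u1 (l1 + c) (\<sigma> + c)))"
        by (simp_all add: phi_def)
      show ?thesis using M unfolding pY pS
        by (auto simp: lexle_def pY'' SL Sc[symmetric] Y'(2))
    qed
    show ?thesis using inU mins by blast
  qed
  show "Sup_LE XX \<in> UB_star XX" using main by blast
  show "\<forall>Y\<in>UB_star XX. lexle (phi (Sup_LE XX)) (phi Y)" using main by blast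
  show "\<forall>Y\<in>UB_star XX. lexle (phi Y) (phi (Sup_LE XX)) \<longrightarrow> Y = Sup_LE XX" using main by blast
qed


end
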